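(* Let $d\geq 2$ and let $\Lambda$ be any quantum channel (completely positive trace-preserving map) on $d\times d$ matrices. Let $|\Phi^{+}\rangle=\frac{1}{\sqrt d}\sum_{i=0}^{d-1}|ii\rangle\in\mathbb{C}^d\otimes\mathbb{C}^d$ and $\rho_{\Phi^+,\Lambda}=(\mathcal{I}\otimes\Lambda)(|\Phi^+\rangle\langle\Phi^+|)$. Then $$\mathbb{F}(\Lambda)\geq\lambda_{\max}(\rho_{\Phi^+,\Lambda}),$$ where $\lambda_{\max}$ denotes the largest eigenvalue.
   Context: For a pure state $|\psi\rangle\in\mathbb{C}^d\otimes\mathbb{C}^d$ and a channel $\Lambda$ acting on the second factor, $\rho_{\psi,\Lambda}=(\mathcal{I}\otimes\Lambda)(|\psi\rangle\langle\psi|)$. The singlet fraction of a two-qudit state $\rho$ is $\mathbb{F}(\rho)=\max_{|\Phi\rangle}\langle\Phi|\rho|\Phi\rangle$, the maximum over all maximally entangled states $|\Phi\rangle\in\mathbb{C}^d\otimes\mathbb{C}^d$. The maximum achievable singlet fraction is $\mathbb{F}^*(\rho)=\max_{L}\mathbb{F}(L(\rho))$, the maximum over all trace-preserving LOCC operations $L$ (local operations and classical communication between the two parties). The one-shot optimal singlet fraction of the channel is $\mathbb{F}(\Lambda)=\max_{|\psi\rangle}\mathbb{F}^*(\rho_{\psi,\Lambda})$, maximized over all pure states $|\psi\rangle\in\mathbb{C}^d\otimes\mathbb{C}^d$. *)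

theory Defs
  imports "Jordan_Normal_Form.Matrix" "Jordan_Normal_Form.Char_Poly"
begin

(* Conventions: C^a \<otimes> C^b is identified with C^(a*b), basis |i\<rangle>|j\<rangle> \<mapsto> index i*b+j
   (first factor = Alice, second factor = Bob). *)

definition kron :: "complex mat \<Rightarrow> complex mat \<Rightarrow> complex mat" where
  "kron A B = mat (dim_row A * dim_row B) (dim_col A * dim_col B)
     (\<lambda>(i,j). A $$ (i div dim_row B, j div dim_col B) * B $$ (i mod dim_row B, j mod dim_col B))"

definition adj :: "complex mat \<Rightarrow> complex mat" where
  "adj A = mat (dim_col A) (dim_row A) (\<lambda>(i,j). cnj (A $$ (j,i)))"

definition unit_mat :: "nat \<Rightarrow> nat \<Rightarrow> nat \<Rightarrow> complex mat" where
  "unit_mat n i j = mat n n (\<lambda>(k,l). if k = i \<and> l = j then 1 else 0)"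

definition block :: "nat \<Rightarrow> complex mat \<Rightarrow> nat \<Rightarrow> nat \<Rightarrow> complex mat" where
  "block b X i j = mat b b (\<lambda>(k,l). X $$ (i*b+k, j*b+l))"

definition id_tensor :: "nat \<Rightarrow> nat \<Rightarrow> (complex mat \<Rightarrow> complex mat) \<Rightarrow> complex mat \<Rightarrow> complex mat" where
  "id_tensor a b \<Lambda> X = (let b' = dim_row (\<Lambda> (0\<^sub>m b b)) in
     mat (a*b') (a*b') (\<lambda>(r,c). \<Lambda> (block b X (r div b') (c div b')) $$ (r mod b', c mod b')))"

definition mtrace :: "complex mat \<Rightarrow> complex" where
  "mtrace A = (\<Sum>i<dim_row A. A $$ (i,i))"

definition msum :: "nat \<Rightarrow> nat \<Rightarrow> nat \<Rightarrow> (nat \<Rightarrow> complex mat) \<Rightarrow> complex mat" where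
  "msum n r c f = mat r c (\<lambda>(i,j). \<Sum>k<n. f k $$ (i,j))"

definition psd :: "nat \<Rightarrow> complex mat \<Rightarrow> bool" where
  "psd n A \<longleftrightarrow> A \<in> carrier_mat n n \<and>
     (\<forall>v \<in> carrier_vec n. let q = (\<Sum>i<n. cnj (v $ i) * (A *\<^sub>v v) $ i) in q \<in> \<real> \<and> Re q \<ge> 0)"

definition quantum_channel :: "nat \<Rightarrow> (complex mat \<Rightarrow> complex mat) \<Rightarrow> bool" where
  "quantum_channel d \<Lambda> \<longleftrightarrow>
     (\<forall>X \<in> carrier_mat d d. \<Lambda> X \<in> carrier_mat d d) \<and>
     (\<forall>X \<in> carrier_mat d d. \<forall>Y \<in> carrier_mat d d. \<forall>s t::complex.
         \<Lambda> (s \<cdot>\<^sub>m X + t \<cdot>\<^sub>m Y) = s \<cdot>\<^sub>m \<Lambda> X + t \<cdot>\<^sub>m \<Lambda> Y) \<and>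
     (\<forall>k X. psd (k*d) X \<longrightarrow> psd (k*d) (id_tensor k d \<Lambda> X)) \<and>
     (\<forall>X \<in> carrier_mat d d. mtrace (\<Lambda> X) = mtrace X)"

definition proj :: "complex vec \<Rightarrow> complex mat" where
  "proj \<psi> = mat (dim_vec \<psi>) (dim_vec \<psi>) (\<lambda>(i,j). \<psi> $ i * cnj (\<psi> $ j))"

definition unit_vector :: "nat \<Rightarrow> complex vec \<Rightarrow> bool" where
  "unit_vector n v \<longleftrightarrow> v \<in> carrier_vec n \<and> (\<Sum>i<n. cmod (v $ i) ^ 2) = 1"

definition ptrace_B :: "nat \<Rightarrow> nat \<Rightarrow> complex mat \<Rightarrow> complex mat" where
  "ptrace_B a b X = mat a a (\<lambda>(i,j). \<Sum>k<b. X $$ (i*b+k, j*b+k))"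

definition max_entangled :: "nat \<Rightarrow> complex vec \<Rightarrow> bool" where
  "max_entangled d \<Phi> \<longleftrightarrow> unit_vector (d*d) \<Phi> \<and>
     ptrace_B d d (proj \<Phi>) = (1 / of_nat d) \<cdot>\<^sub>m 1\<^sub>m d"

definition expval :: "complex vec \<Rightarrow> complex mat \<Rightarrow> real" where
  "expval \<Phi> \<rho> = Re (\<Sum>i<dim_vec \<Phi>. cnj (\<Phi> $ i) * (\<rho> *\<^sub>v \<Phi>) $ i)"

definition singlet_fraction :: "nat \<Rightarrow> complex mat \<Rightarrow> real" where
  "singlet_fraction d \<rho> = (SUP \<Phi> \<in> {\<Phi>. max_entangled d \<Phi>}. expval \<Phi> \<rho>)"

(* Each round one party applies a local instrument given by Kraus
   operators K j (j < n, dimensions allowed to change) with \<Sum> K j^\<dagger> K j = 1, announces the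
   outcome j, and the protocol continues with an LOCC map L j depending on j. *)
inductive LOCC :: "nat \<Rightarrow> nat \<Rightarrow> nat \<Rightarrow> nat \<Rightarrow> (complex mat \<Rightarrow> complex mat) \<Rightarrow> bool" where
  LOCC_id: "LOCC a b a b (\<lambda>X. X)"
| LOCC_Alice: "\<lbrakk> \<forall>j<n. K j \<in> carrier_mat (a' j) a;
     msum n a a (\<lambda>j. adj (K j) * K j) = 1\<^sub>m a;
     \<forall>j<n. LOCC (a' j) b a'' b'' (L j) \<rbrakk> \<Longrightarrow>
     LOCC a b a'' b'' (\<lambda>X. msum n (a''*b'') (a''*b'') (\<lambda>j. L j (kron (K j) (1\<^sub>m b) * X * adj (kron (K j) (1\<^sub>m b)))))"
| LOCC_Bob: "\<lbrakk> \<forall>j<n. K j \<in> carrier_mat (b' j) b;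
     msum n b b (\<lambda>j. adj (K j) * K j) = 1\<^sub>m b;
     \<forall>j<n. LOCC a (b' j) a'' b'' (L j) \<rbrakk> \<Longrightarrow>
     LOCC a b a'' b'' (\<lambda>X. msum n (a''*b'') (a''*b'') (\<lambda>j. L j (kron (1\<^sub>m a) (K j) * X * adj (kron (1\<^sub>m a) (K j)))))"

definition max_singlet_fraction :: "nat \<Rightarrow> complex mat \<Rightarrow> real" where
  "max_singlet_fraction d \<rho> = (SUP L \<in> {L. LOCC d d d d L}. singlet_fraction d (L \<rho>))"

definition rho_state :: "nat \<Rightarrow> complex vec \<Rightarrow> (complex mat \<Rightarrow> complex mat) \<Rightarrow> complex mat" where
  "rho_state d \<psi> \<Lambda> = id_tensor d d \<Lambda> (proj \<psi>)"

definition channel_singlet_fraction :: "nat \<Rightarrow> (complex mat \<Rightarrow> complex mat) \<Rightarrow> real" where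
  "channel_singlet_fraction d \<Lambda> =
     (SUP \<psi> \<in> {\<psi>. unit_vector (d*d) \<psi>}. max_singlet_fraction d (rho_state d \<psi> \<Lambda>))"

definition phi_plus :: "nat \<Rightarrow> complex vec" where
  "phi_plus d = vec (d*d) (\<lambda>k. if k div d = k mod d then 1 / complex_of_real (sqrt (real d)) else 0)"

definition lambda_max :: "complex mat \<Rightarrow> real" where
  "lambda_max A = Max {x::real. eigenvalue A (complex_of_real x)}"

end

theory Submission
  imports Defs "Jordan_Normal_Form.Spectral_Radius"
begin


lemma sum_split: fixes f :: "nat \<Rightarrow> 'a::comm_monoid_add" shows "(\<Sum>r<m*b. f r) = (\<Sum>i<m. \<Sum>j<b. f (i*b+j))"
proof -
  have "(\<Sum>r<m*b. f r) = (\<Sum>i<m. sum f {i * b..<i * b + b})"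
    using sum.nat_group[of f b m] by simp
  also have "\<dots> = (\<Sum>i<m. \<Sum>j<b. f (i*b+j))"
  proof (rule sum.cong[OF refl])
    fix i
    have "sum f {0 + i * b..<b + i * b} = (\<Sum>j = 0..<b. f (j + i*b))"
      by (rule sum.shift_bounds_nat_ivl)
    then show "sum f {i * b..<i * b + b} = (\<Sum>j<b. f (i*b+j))"
      by (simp add: add.commute atLeast0LessThan)
  qed
  finally show ?thesis .
qed

lemma mv: "A \<in> carrier_mat n m \<Longrightarrow> dim_vec v = m \<Longrightarrow> i < n \<Longrightarrow>
  (A *\<^sub>v v) $ i = (\<Sum>k<m. A $$ (i,k) * v $ k)"
  by (auto simp: scalar_prod_def atLeast0LessThan)

lemma two_pt: "i<(n::nat) \<Longrightarrow> j<n \<Longrightarrow> i\<noteq>j \<Longrightarrow>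
  (\<Sum>k<n. (if k=i then x else if k=j then y else 0) * (f k::complex)) = x*f i + y*f j"
proof -
  assume a: "i<n" "j<n" "i\<noteq>j"
  have "(\<Sum>k<n. (if k=i then x else if k=j then y else 0) * f k)
     = (\<Sum>k<n. (if k=i then x * f k else 0) + (if k=j then y * f k else 0))"
    by (rule sum.cong, auto simp: a)
  also have "\<dots> = x*f i + y*f j" using a by (simp add: sum.distrib sum.delta sum.delta')
  finally show ?thesis .
qed

lemma psd_diag: assumes "psd n Y" "i<n" shows "Y $$ (i,i) \<in> \<real>" "Re (Y $$ (i,i)) \<ge> 0"
proof -
  have Y: "Y \<in> carrier_mat n n" using assms unfolding psd_def by auto
  let ?v = "unit_vec n i :: complex vec"
  have q: "(\<Sum>a<n. cnj (?v $ a) * (Y *\<^sub>v ?v) $ a) = Y $$ (i,i)"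
  proof -
    have "\<And>a. a < n \<Longrightarrow> (Y *\<^sub>v ?v) $ a = Y $$ (a,i)"
      using Y assms(2) by (subst mv[OF Y], auto simp: unit_vec_def if_distrib cong: if_cong)
    then have "(\<Sum>a<n. cnj (?v $ a) * (Y *\<^sub>v ?v) $ a) = (\<Sum>a<n. if a = i then Y $$ (a,i) else 0)"
      by (intro sum.cong, auto simp: unit_vec_def)
    then show ?thesis using assms(2) by simp
  qed
  have "?v \<in> carrier_vec n" by simp
  then have "(\<Sum>a<n. cnj (?v $ a) * (Y *\<^sub>v ?v) $ a) \<in> \<real> \<and> Re (\<Sum>a<n. cnj (?v $ a) * (Y *\<^sub>v ?v) $ a) \<ge> 0"
    using assms(1) unfolding psd_def Let_def by blast
  then show "Y $$ (i,i) \<in> \<real>" "Re (Y $$ (i,i)) \<ge> 0" using q by auto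
qed

lemma psd_two: assumes "psd n Y" "i<n" "j<n" "i\<noteq>j"
  shows "Y$$(i,i) + c * Y$$(i,j) + cnj c * Y$$(j,i) + cnj c * c * Y$$(j,j) \<in> \<real> \<and>
         Re (Y$$(i,i) + c * Y$$(i,j) + cnj c * Y$$(j,i) + cnj c * c * Y$$(j,j)) \<ge> 0"
proof -
  have Y: "Y \<in> carrier_mat n n" using assms unfolding psd_def by auto
  define v where "v = vec n (\<lambda>k. if k=i then 1 else if k=j then c else 0)"
  have vc: "v \<in> carrier_vec n" unfolding v_def by simp
  have va: "\<And>a. a<n \<Longrightarrow> v $ a = (if a=i then 1 else if a=j then c else 0)" unfolding v_def by simp
  have Yv: "\<And>a. a < n \<Longrightarrow> (Y *\<^sub>v v) $ a = Y$$(a,i) + c * Y$$(a,j)"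
  proof -
    fix a assume "a<n"
    have "(Y *\<^sub>v v) $ a = (\<Sum>k<n. Y $$ (a,k) * v $ k)" using mv[OF Y] vc \<open>a<n\<close> by auto
    also have "\<dots> = (\<Sum>k<n. (if k=i then 1 else if k=j then c else 0) * Y $$ (a,k))"
      by (rule sum.cong, auto simp: va)
    also have "\<dots> = Y$$(a,i) + c * Y$$(a,j)" using two_pt[OF assms(2-4)] by simp
    finally show "(Y *\<^sub>v v) $ a = Y$$(a,i) + c * Y$$(a,j)" .
  qed
  have "(\<Sum>a<n. cnj (v $ a) * (Y *\<^sub>v v) $ a)
     = (\<Sum>a<n. (if a=i then 1 else if a=j then cnj c else 0) * (Y$$(a,i) + c * Y$$(a,j)))"
    by (rule sum.cong, auto simp: va Yv)
  also have "\<dots> = Y$$(i,i) + c * Y$$(i,j) + cnj c * Y$$(j,i) + cnj c * c * Y$$(j,j)"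
    using two_pt[OF assms(2-4), of 1 "cnj c" "\<lambda>a. Y$$(a,i) + c * Y$$(a,j)"] by (simp add: algebra_simps)
  finally have q: "(\<Sum>a<n. cnj (v $ a) * (Y *\<^sub>v v) $ a) = Y$$(i,i) + c * Y$$(i,j) + cnj c * Y$$(j,i) + cnj c * c * Y$$(j,j)" .
  show ?thesis using assms(1) vc unfolding psd_def Let_def q[symmetric] by blast
qed

lemma psd_offdiag: assumes "psd n Y" "i<n" "j<n"
  shows "cmod (Y$$(i,j)) \<le> Re (Y$$(i,i)) + Re (Y$$(j,j))"
proof (cases "i = j")
  case True
  then show ?thesis using psd_diag[OF assms(1,2)]
    by (metis Reals_cases Re_complex_of_real add_increasing2 norm_of_real abs_of_nonneg order_refl)
next
  case False
  define P where "P = Re (Y$$(i,i)) + Re (Y$$(j,j))"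
  have di: "Y$$(i,i) = of_real (Re (Y$$(i,i)))" using psd_diag[OF assms(1,2)] by (metis Reals_cases Re_complex_of_real)
  have dj: "Y$$(j,j) = of_real (Re (Y$$(j,j)))" using psd_diag[OF assms(1,3)] by (metis Reals_cases Re_complex_of_real)
  define s where "s = Y$$(i,j) + Y$$(j,i)"
  define t where "t = \<i> * (Y$$(i,j) - Y$$(j,i))"
  have c1: "Y$$(i,i) + Y$$(j,j) + s \<in> \<real> \<and> Re (Y$$(i,i) + Y$$(j,j) + s) \<ge> 0"
    using psd_two[OF assms False, of 1] unfolding s_def by (simp add: algebra_simps)
  have c2: "Y$$(i,i) + Y$$(j,j) - s \<in> \<real> \<and> Re (Y$$(i,i) + Y$$(j,j) - s) \<ge> 0"
    using psd_two[OF assms False, of "-1"] unfolding s_def by (simp add: algebra_simps)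
  have c3: "Y$$(i,i) + Y$$(j,j) + t \<in> \<real> \<and> Re (Y$$(i,i) + Y$$(j,j) + t) \<ge> 0"
    using psd_two[OF assms False, of "\<i>"] unfolding t_def by (simp add: algebra_simps)
  have c4: "Y$$(i,i) + Y$$(j,j) - t \<in> \<real> \<and> Re (Y$$(i,i) + Y$$(j,j) - t) \<ge> 0"
    using psd_two[OF assms False, of "-\<i>"] unfolding t_def by (simp add: algebra_simps)
  have sR: "s \<in> \<real>" using c1 di dj
    by (metis Reals_diff Reals_add Reals_of_real add_diff_cancel_left')
  have tR: "t \<in> \<real>" using c3 di dj
    by (metis Reals_diff Reals_add Reals_of_real add_diff_cancel_left')
  have "\<bar>Re s\<bar> \<le> P" using c1 c2 unfolding P_def by auto
  then have ns: "cmod s \<le> P" using sR by (metis Reals_cases Re_complex_of_real norm_of_real)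
  have "\<bar>Re t\<bar> \<le> P" using c3 c4 unfolding P_def by auto
  then have nt: "cmod t \<le> P" using tR by (metis Reals_cases Re_complex_of_real norm_of_real)
  have "2 * Y$$(i,j) = s - \<i> * t" unfolding s_def t_def by (simp add: algebra_simps)
  then have "2 * cmod (Y$$(i,j)) = cmod (s - \<i> * t)" by (metis norm_mult norm_numeral)
  then have "cmod (Y$$(i,j)) = cmod (s - \<i> * t) / 2" by simp
  also have "\<dots> \<le> (cmod s + cmod (\<i> * t)) / 2" by (simp add: norm_triangle_ineq4 divide_right_mono)
  also have "\<dots> \<le> P" using ns nt by (simp add: norm_mult)
  finally show ?thesis unfolding P_def .
qed

lemma psd_carrier: "psd n Y \<Longrightarrow> Y \<in> carrier_mat n n" unfolding psd_def by auto

lemma psd_entry_bound: assumes "psd N Y" "mtrace Y = 1" "i<N" "j<N"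
  shows "cmod (Y$$(i,j)) \<le> 2"
proof -
  have Y: "Y \<in> carrier_mat N N" using psd_carrier[OF assms(1)] .
  have tr: "(\<Sum>k<N. Re (Y$$(k,k))) = 1" using assms(2) Y unfolding mtrace_def
    by (metis Re_sum one_complex.simps(1) carrier_matD(1))
  have le: "\<And>i. i<N \<Longrightarrow> Re (Y$$(i,i)) \<le> 1"
  proof -
    fix i assume "i<N"
    have "Re (Y$$(i,i)) \<le> (\<Sum>k<N. Re (Y$$(k,k)))"
      by (rule member_le_sum, use \<open>i<N\<close> psd_diag(2)[OF assms(1)] in auto)
    then show "Re (Y$$(i,i)) \<le> 1" using tr by simp
  qed
  show ?thesis using psd_offdiag[OF assms(1,3,4)] le[OF assms(3)] le[OF assms(4)] by simp
qed

lemma unit_entry_bound: assumes "unit_vector N v" "i<N" shows "cmod (v $ i) \<le> 1"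
proof -
  have "cmod (v $ i) ^ 2 \<le> (\<Sum>k<N. cmod (v $ k) ^ 2)"
    by (rule member_le_sum, use assms(2) in auto)
  then have "cmod (v $ i) ^ 2 \<le> 1" using assms(1) unfolding unit_vector_def by simp
  then show ?thesis by (simp add: power_le_one_iff)
qed

lemma expval_bound: assumes "psd N Y" "mtrace Y = 1" "unit_vector N \<Phi>"
  shows "expval \<Phi> Y \<le> 2 * real N ^ 2"
proof -
  have Y: "Y \<in> carrier_mat N N" using psd_carrier[OF assms(1)] .
  have dv: "dim_vec \<Phi> = N" using assms(3) unfolding unit_vector_def by auto
  have inner: "\<And>i. i<N \<Longrightarrow> cmod (cnj (\<Phi> $ i) * (Y *\<^sub>v \<Phi>) $ i) \<le> 2 * real N"
  proof -
    fix i assume i: "i<N"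
    have "cmod ((Y *\<^sub>v \<Phi>) $ i) = cmod (\<Sum>k<N. Y $$ (i,k) * \<Phi> $ k)" using mv[OF Y dv i] by simp
    also have "\<dots> \<le> (\<Sum>k<N. cmod (Y $$ (i,k) * \<Phi> $ k))" by (rule norm_sum)
    also have "\<dots> \<le> (\<Sum>k<N. 2)"
    proof (rule sum_mono)
      fix k assume "k \<in> {..<N}"
      then have k: "k<N" by simp
      have "cmod (Y $$ (i,k) * \<Phi> $ k) = cmod (Y $$ (i,k)) * cmod (\<Phi> $ k)" by (simp add: norm_mult)
      also have "\<dots> \<le> 2 * 1"
        by (rule mult_mono, use psd_entry_bound[OF assms(1,2) i k] unit_entry_bound[OF assms(3) k] in auto)
      finally show "cmod (Y $$ (i,k) * \<Phi> $ k) \<le> 2" by simp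
    qed
    finally have a: "cmod ((Y *\<^sub>v \<Phi>) $ i) \<le> 2 * real N" by simp
    have "cmod (cnj (\<Phi> $ i) * (Y *\<^sub>v \<Phi>) $ i) = cmod (\<Phi> $ i) * cmod ((Y *\<^sub>v \<Phi>) $ i)"
      by (simp add: norm_mult)
    also have "\<dots> \<le> 1 * (2 * real N)"
      by (rule mult_mono, use a unit_entry_bound[OF assms(3) i] in auto)
    finally show "cmod (cnj (\<Phi> $ i) * (Y *\<^sub>v \<Phi>) $ i) \<le> 2 * real N" by simp
  qed
  have "expval \<Phi> Y \<le> cmod (\<Sum>i<N. cnj (\<Phi> $ i) * (Y *\<^sub>v \<Phi>) $ i)"
    unfolding expval_def dv by (rule complex_Re_le_cmod)
  also have "\<dots> \<le> (\<Sum>i<N. cmod (cnj (\<Phi> $ i) * (Y *\<^sub>v \<Phi>) $ i))" by (rule norm_sum)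
  also have "\<dots> \<le> (\<Sum>i<N. 2 * real N)" by (rule sum_mono, use inner in auto)
  also have "\<dots> = 2 * real N ^ 2" by (simp add: power2_eq_square)
  finally show ?thesis .
qed

lemma adj_carrier: "M \<in> carrier_mat m n \<Longrightarrow> adj M \<in> carrier_mat n m"
  unfolding adj_def by auto

lemma adj_index: "M \<in> carrier_mat m n \<Longrightarrow> i<n \<Longrightarrow> j<m \<Longrightarrow> adj M $$ (i,j) = cnj (M$$(j,i))"
  unfolding adj_def by auto

lemma mm: "A \<in> carrier_mat n m \<Longrightarrow> B \<in> carrier_mat m k \<Longrightarrow> i<n \<Longrightarrow> j<k \<Longrightarrow>
  (A*B)$$(i,j) = (\<Sum>l<m. A$$(i,l) * B$$(l,j))"
  by (auto simp: scalar_prod_def atLeast0LessThan)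

lemma qf_conj: assumes M: "M \<in> carrier_mat m n" and u: "u \<in> carrier_vec n" and v: "v \<in> carrier_vec m"
  shows "(\<Sum>i<m. cnj (v$i) * (M *\<^sub>v u)$i) = (\<Sum>k<n. cnj ((adj M *\<^sub>v v)$k) * u$k)"
proof -
  have A: "adj M \<in> carrier_mat n m" using adj_carrier[OF M] .
  have "(\<Sum>i<m. cnj (v$i) * (M *\<^sub>v u)$i) = (\<Sum>i<m. \<Sum>k<n. cnj (v$i) * M$$(i,k) * u$k)"
    using mv[OF M] u by (auto simp: sum_distrib_left mult.assoc intro!: sum.cong)
  also have "\<dots> = (\<Sum>k<n. \<Sum>i<m. cnj (v$i) * M$$(i,k) * u$k)" by (rule sum.swap)
  also have "\<dots> = (\<Sum>k<n. cnj ((adj M *\<^sub>v v)$k) * u$k)"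
  proof (rule sum.cong[OF refl])
    fix k assume "k \<in> {..<n}"
    then have k: "k<n" by simp
    have "cnj ((adj M *\<^sub>v v)$k) = cnj (\<Sum>i<m. adj M $$ (k,i) * v$i)" using mv[OF A] v k by auto
    also have "\<dots> = (\<Sum>i<m. M$$(i,k) * cnj (v$i))" using adj_index[OF M k] by (auto simp: cnj_sum)
    also have "\<dots> = (\<Sum>i<m. cnj (v$i) * M$$(i,k))" by (simp add: mult.commute)
    finally have c: "cnj ((adj M *\<^sub>v v)$k) = (\<Sum>i<m. cnj (v$i) * M$$(i,k))" .
    show "(\<Sum>i<m. cnj (v$i) * M$$(i,k) * u$k) = cnj ((adj M *\<^sub>v v)$k) * u$k"
      unfolding c by (rule sum_distrib_right[symmetric])
  qed
  finally show ?thesis .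
qed

lemma psd_conj: assumes M: "M \<in> carrier_mat m n" and X: "psd n X" shows "psd m (M * X * adj M)"
proof -
  have Xc: "X \<in> carrier_mat n n" using psd_carrier[OF X] .
  have A: "adj M \<in> carrier_mat n m" using adj_carrier[OF M] .
  have MX: "M * X \<in> carrier_mat m n" by (rule mult_carrier_mat[OF M Xc])
  show ?thesis unfolding psd_def Let_def
  proof (intro conjI ballI)
    show "M * X * adj M \<in> carrier_mat m m" by (rule mult_carrier_mat[OF MX A])
    fix v :: "complex vec" assume v: "v \<in> carrier_vec m"
    define w where "w = adj M *\<^sub>v v"
    have w: "w \<in> carrier_vec n" unfolding w_def by (rule mult_mat_vec_carrier[OF A v])
    have Xw: "X *\<^sub>v w \<in> carrier_vec n" by (rule mult_mat_vec_carrier[OF Xc w])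
    have "M * X * adj M *\<^sub>v v = (M * X) *\<^sub>v w" unfolding w_def by (rule assoc_mult_mat_vec[OF MX A v])
    also have "\<dots> = M *\<^sub>v (X *\<^sub>v w)" by (rule assoc_mult_mat_vec[OF M Xc w])
    finally have eq: "M * X * adj M *\<^sub>v v = M *\<^sub>v (X *\<^sub>v w)" .
    have q: "(\<Sum>i<m. cnj (v $ i) * (M * X * adj M *\<^sub>v v) $ i) = (\<Sum>k<n. cnj (w$k) * (X *\<^sub>v w)$k)"
      unfolding eq w_def by (rule qf_conj[OF M Xw[unfolded w_def] v])
    have "(\<Sum>k<n. cnj (w$k) * (X *\<^sub>v w)$k) \<in> \<real> \<and> Re (\<Sum>k<n. cnj (w$k) * (X *\<^sub>v w)$k) \<ge> 0"
      using X w unfolding psd_def Let_def by blast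
    then show "(\<Sum>i<m. cnj (v $ i) * (M * X * adj M *\<^sub>v v) $ i) \<in> \<real>"
      "0 \<le> Re (\<Sum>i<m. cnj (v $ i) * (M * X * adj M *\<^sub>v v) $ i)" unfolding q by auto
  qed
qed

lemma msum_carrier: "msum n r c f \<in> carrier_mat r c" unfolding msum_def by auto
lemma msum_dim[simp]: "dim_row (msum n r c f) = r" "dim_col (msum n r c f) = c" unfolding msum_def by auto

lemma msum_index: "i<r \<Longrightarrow> j<c \<Longrightarrow> msum n r c f $$ (i,j) = (\<Sum>k<n. f k $$ (i,j))"
  unfolding msum_def by auto

lemma psd_msum: assumes "\<forall>j<n. psd r (f j)" shows "psd r (msum n r r f)"
  unfolding psd_def Let_def
proof (intro conjI ballI)
  show "msum n r r f \<in> carrier_mat r r" by (rule msum_carrier)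
  fix v :: "complex vec" assume v: "v \<in> carrier_vec r"
  have fc: "\<And>j. j<n \<Longrightarrow> f j \<in> carrier_mat r r" using assms psd_carrier by auto
  have "(\<Sum>i<r. cnj (v $ i) * (msum n r r f *\<^sub>v v) $ i) = (\<Sum>i<r. \<Sum>j<n. cnj (v $ i) * (f j *\<^sub>v v) $ i)"
  proof (rule sum.cong[OF refl])
    fix i assume "i \<in> {..<r}" then have i: "i<r" by simp
    have "(msum n r r f *\<^sub>v v) $ i = (\<Sum>k<r. msum n r r f $$ (i,k) * v $ k)"
      using mv[OF msum_carrier[of n r r f] _ i] v by auto
    also have "\<dots> = (\<Sum>k<r. (\<Sum>j<n. f j $$ (i,k)) * v $ k)"
      by (auto intro!: sum.cong simp: msum_index[OF i])
    also have "\<dots> = (\<Sum>j<n. \<Sum>k<r. f j $$ (i,k) * v $ k)"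
      by (simp add: sum_distrib_right sum.swap[of _ "{..<r}"])
    also have "\<dots> = (\<Sum>j<n. (f j *\<^sub>v v) $ i)"
      using mv[OF fc] v i by (auto intro!: sum.cong)
    finally show "cnj (v $ i) * (msum n r r f *\<^sub>v v) $ i = (\<Sum>j<n. cnj (v $ i) * (f j *\<^sub>v v) $ i)"
      by (simp add: sum_distrib_left)
  qed
  also have "\<dots> = (\<Sum>j<n. \<Sum>i<r. cnj (v $ i) * (f j *\<^sub>v v) $ i)" by (rule sum.swap)
  finally have eq: "(\<Sum>i<r. cnj (v $ i) * (msum n r r f *\<^sub>v v) $ i) = (\<Sum>j<n. \<Sum>i<r. cnj (v $ i) * (f j *\<^sub>v v) $ i)" .
  have each: "\<And>j. j<n \<Longrightarrow> (\<Sum>i<r. cnj (v $ i) * (f j *\<^sub>v v) $ i) \<in> \<real> \<and> Re (\<Sum>i<r. cnj (v $ i) * (f j *\<^sub>v v) $ i) \<ge> 0"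
    using assms v unfolding psd_def Let_def by blast
  show "(\<Sum>i<r. cnj (v $ i) * (msum n r r f *\<^sub>v v) $ i) \<in> \<real>"
    unfolding eq by (rule sum_in_Reals, use each in auto)
  show "0 \<le> Re (\<Sum>i<r. cnj (v $ i) * (msum n r r f *\<^sub>v v) $ i)"
    unfolding eq Re_sum by (rule sum_nonneg, use each in auto)
qed

lemma mtrace_msum: assumes "\<forall>j<n. f j \<in> carrier_mat r r"
  shows "mtrace (msum n r r f) = (\<Sum>j<n. mtrace (f j))"
proof -
  have "mtrace (msum n r r f) = (\<Sum>i<r. \<Sum>j<n. f j $$ (i,i))"
    unfolding mtrace_def using msum_index msum_carrier by (auto intro!: sum.cong)
  also have "\<dots> = (\<Sum>j<n. \<Sum>i<r. f j $$ (i,i))" by (rule sum.swap)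
  also have "\<dots> = (\<Sum>j<n. mtrace (f j))" unfolding mtrace_def
    by (rule sum.cong[OF refl], use assms in auto)
  finally show ?thesis .
qed

lemma tr_conj: assumes M: "M \<in> carrier_mat m N" and X: "X \<in> carrier_mat N N"
  shows "mtrace (M*X*adj M) = (\<Sum>p<N. \<Sum>q<N. X$$(q,p) * (adj M * M)$$(p,q))"
proof -
  have A: "adj M \<in> carrier_mat N m" using adj_carrier[OF M] .
  have MX: "M*X \<in> carrier_mat m N" using M X by auto
  have d: "dim_row (M*X*adj M) = m" using M by simp
  have e: "\<And>i. i<m \<Longrightarrow> (M*X*adj M)$$(i,i) = (\<Sum>p<N. \<Sum>q<N. M$$(i,q) * X$$(q,p) * cnj (M$$(i,p)))"
  proof -
    fix i assume i: "i<m"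
    have "(M*X*adj M)$$(i,i) = (\<Sum>p<N. (M*X)$$(i,p) * adj M $$ (p,i))" by (rule mm[OF MX A i i])
    also have "\<dots> = (\<Sum>p<N. (\<Sum>q<N. M$$(i,q) * X$$(q,p)) * cnj (M$$(i,p)))"
      by (rule sum.cong[OF refl], simp add: mm[OF M X i] adj_index[OF M _ i])
    also have "\<dots> = (\<Sum>p<N. \<Sum>q<N. M$$(i,q) * X$$(q,p) * cnj (M$$(i,p)))"
      by (simp add: sum_distrib_right)
    finally show "(M*X*adj M)$$(i,i) = (\<Sum>p<N. \<Sum>q<N. M$$(i,q) * X$$(q,p) * cnj (M$$(i,p)))" .
  qed
  have "mtrace (M*X*adj M) = (\<Sum>i<m. \<Sum>p<N. \<Sum>q<N. M$$(i,q) * X$$(q,p) * cnj (M$$(i,p)))"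
    unfolding mtrace_def d by (rule sum.cong[OF refl], simp add: e)
  also have "\<dots> = (\<Sum>p<N. \<Sum>i<m. \<Sum>q<N. M$$(i,q) * X$$(q,p) * cnj (M$$(i,p)))" by (rule sum.swap)
  also have "\<dots> = (\<Sum>p<N. \<Sum>q<N. \<Sum>i<m. M$$(i,q) * X$$(q,p) * cnj (M$$(i,p)))"
    by (rule sum.cong[OF refl], rule sum.swap)
  also have "\<dots> = (\<Sum>p<N. \<Sum>q<N. X$$(q,p) * (adj M * M)$$(p,q))"
  proof (intro sum.cong refl)
    fix p q assume "p \<in> {..<N}" "q \<in> {..<N}"
    then have p: "p<N" and q: "q<N" by auto
    have "(adj M * M)$$(p,q) = (\<Sum>i<m. adj M $$ (p,i) * M$$(i,q))" by (rule mm[OF A M p q])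
    also have "\<dots> = (\<Sum>i<m. cnj (M$$(i,p)) * M$$(i,q))" by (rule sum.cong[OF refl], simp add: adj_index[OF M p])
    finally have e: "(adj M * M)$$(p,q) = (\<Sum>i<m. cnj (M$$(i,p)) * M$$(i,q))" .
    show "(\<Sum>i<m. M$$(i,q) * X$$(q,p) * cnj (M$$(i,p))) = X$$(q,p) * (adj M * M)$$(p,q)"
      unfolding e sum_distrib_left by (rule sum.cong[OF refl], simp add: mult_ac)
  qed
  finally show ?thesis .
qed

lemma tr_sum: assumes X: "X \<in> carrier_mat N N" and M: "\<forall>j<n. M j \<in> carrier_mat (m j) N"
  and id: "\<forall>p<N. \<forall>q<N. (\<Sum>j<n. (adj (M j) * M j)$$(p,q)) = (if p = q then 1 else 0)"
  shows "(\<Sum>j<n. mtrace (M j * X * adj (M j))) = mtrace X"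
proof -
  have "(\<Sum>j<n. mtrace (M j * X * adj (M j))) = (\<Sum>j<n. \<Sum>p<N. \<Sum>q<N. X$$(q,p) * (adj (M j) * M j)$$(p,q))"
    by (rule sum.cong[OF refl], rule tr_conj[OF _ X], use M in auto)
  also have "\<dots> = (\<Sum>p<N. \<Sum>j<n. \<Sum>q<N. X$$(q,p) * (adj (M j) * M j)$$(p,q))" by (rule sum.swap)
  also have "\<dots> = (\<Sum>p<N. \<Sum>q<N. \<Sum>j<n. X$$(q,p) * (adj (M j) * M j)$$(p,q))"
    by (rule sum.cong[OF refl], rule sum.swap)
  also have "\<dots> = (\<Sum>p<N. \<Sum>q<N. X$$(q,p) * (if p = q then 1 else 0))"
    using id by (auto simp: sum_distrib_left[symmetric] intro!: sum.cong)
  also have "\<dots> = (\<Sum>p<N. X$$(p,p))" by (auto intro!: sum.cong simp: if_distrib cong: if_cong)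
  also have "\<dots> = mtrace X" unfolding mtrace_def using X by auto
  finally show ?thesis .
qed


lemma idx_lt: "i1 < (a::nat) \<Longrightarrow> i2 < b \<Longrightarrow> i1*b + i2 < a*b"
proof -
  assume "i1 < a" "i2 < b"
  then have "i1*b + i2 < Suc i1 * b" by simp
  also have "\<dots> \<le> a * b" using \<open>i1<a\<close> by (intro mult_le_mono1) simp
  finally show ?thesis .
qed

lemma kron_carrier: "kron A B \<in> carrier_mat (dim_row A * dim_row B) (dim_col A * dim_col B)"
  unfolding kron_def by auto

lemma kron_index: "i1 < dim_row A \<Longrightarrow> i2 < dim_row B \<Longrightarrow> j1 < dim_col A \<Longrightarrow> j2 < dim_col B \<Longrightarrow>
  kron A B $$ (i1*dim_row B + i2, j1*dim_col B + j2) = A$$(i1,j1) * B$$(i2,j2)"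
  unfolding kron_def by (subst index_mat, auto simp: idx_lt)

lemma adjmm: "M \<in> carrier_mat r c \<Longrightarrow> p<c \<Longrightarrow> q<c \<Longrightarrow>
  (adj M * M)$$(p,q) = (\<Sum>i<r. cnj (M$$(i,p)) * M$$(i,q))"
proof -
  assume M: "M \<in> carrier_mat r c" and p: "p<c" and q: "q<c"
  have "(adj M * M)$$(p,q) = (\<Sum>i<r. adj M $$ (p,i) * M$$(i,q))" by (rule mm[OF adj_carrier[OF M] M p q])
  also have "\<dots> = (\<Sum>i<r. cnj (M$$(i,p)) * M$$(i,q))" by (rule sum.cong[OF refl], simp add: adj_index[OF M p])
  finally show ?thesis .
qed

lemma adj_kron: assumes A: "A \<in> carrier_mat rA cA" and B: "B \<in> carrier_mat rB cB"
  and p1: "p1<cA" and q1: "q1<cA" and p2: "p2<cB" and q2: "q2<cB"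
  shows "(adj (kron A B) * kron A B)$$(p1*cB+p2, q1*cB+q2) = (adj A * A)$$(p1,q1) * (adj B * B)$$(p2,q2)"
proof -
  have K: "kron A B \<in> carrier_mat (rA*rB) (cA*cB)" using kron_carrier[of A B] A B by simp
  have "(adj (kron A B) * kron A B)$$(p1*cB+p2, q1*cB+q2)
      = (\<Sum>r<rA*rB. cnj (kron A B $$ (r, p1*cB+p2)) * kron A B $$ (r, q1*cB+q2))"
    by (rule adjmm[OF K], auto simp: idx_lt p1 p2 q1 q2)
  also have "\<dots> = (\<Sum>r1<rA. \<Sum>r2<rB. cnj (kron A B $$ (r1*rB+r2, p1*cB+p2)) * kron A B $$ (r1*rB+r2, q1*cB+q2))"
    by (rule sum_split)
  also have "\<dots> = (\<Sum>r1<rA. \<Sum>r2<rB. (cnj (A$$(r1,p1)) * A$$(r1,q1)) * (cnj (B$$(r2,p2)) * B$$(r2,q2)))"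
  proof (intro sum.cong refl)
    fix r1 r2 assume "r1 \<in> {..<rA}" "r2 \<in> {..<rB}"
    then have r: "r1 < dim_row A" "r2 < dim_row B" using A B by auto
    have c: "p1 < dim_col A" "q1 < dim_col A" "p2 < dim_col B" "q2 < dim_col B" using A B p1 q1 p2 q2 by auto
    have e1: "kron A B $$ (r1*rB+r2, p1*cB+p2) = A$$(r1,p1) * B$$(r2,p2)"
      using kron_index[OF r c(1) c(3)] A B by simp
    have e2: "kron A B $$ (r1*rB+r2, q1*cB+q2) = A$$(r1,q1) * B$$(r2,q2)"
      using kron_index[OF r c(2) c(4)] A B by simp
    show "cnj (kron A B $$ (r1*rB+r2, p1*cB+p2)) * kron A B $$ (r1*rB+r2, q1*cB+q2)
        = (cnj (A$$(r1,p1)) * A$$(r1,q1)) * (cnj (B$$(r2,p2)) * B$$(r2,q2))"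
      unfolding e1 e2 by (simp add: mult_ac)
  qed
  also have "\<dots> = (\<Sum>r1<rA. cnj (A$$(r1,p1)) * A$$(r1,q1)) * (\<Sum>r2<rB. cnj (B$$(r2,p2)) * B$$(r2,q2))"
    by (rule sum_product[symmetric])
  also have "\<dots> = (adj A * A)$$(p1,q1) * (adj B * B)$$(p2,q2)"
    using adjmm[OF A p1 q1] adjmm[OF B p2 q2] by simp
  finally show ?thesis .
qed

lemma adj_one: "p<b \<Longrightarrow> q<b \<Longrightarrow> (adj (1\<^sub>m b) * 1\<^sub>m b)$$(p,q) = (if p=q then 1 else 0)"
proof -
  assume p: "p<b" and q: "q<b"
  have "(adj (1\<^sub>m b) * 1\<^sub>m b)$$(p,q) = (\<Sum>i<b. cnj (1\<^sub>m b $$ (i,p)) * 1\<^sub>m b $$ (i,q))"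
    by (rule adjmm[OF one_carrier_mat p q])
  also have "\<dots> = (\<Sum>i<b. if i = p then (if p = q then 1 else 0) else 0)"
    by (rule sum.cong[OF refl], auto simp: p q)
  also have "\<dots> = (if p=q then 1 else 0)" using p by simp
  finally show ?thesis .
qed

lemma eq_divmod: "(0::nat) < b \<Longrightarrow> (p = q) = (p div b = q div b \<and> p mod b = q mod b)"
  by (metis div_mult_mod_eq)

lemma alice_id: assumes K: "\<forall>j<n. K j \<in> carrier_mat (a' j) a"
  and S: "msum n a a (\<lambda>j. adj (K j) * K j) = 1\<^sub>m a" and p: "p<a*b" and q: "q<a*b"
  shows "(\<Sum>j<n. (adj (kron (K j) (1\<^sub>m b)) * kron (K j) (1\<^sub>m b))$$(p,q)) = (if p=q then 1 else 0)"
proof -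
  have b: "0 < b" using p by (cases b, auto)
  define p1 p2 q1 q2 where "p1 = p div b" "p2 = p mod b" "q1 = q div b" "q2 = q mod b"
  have lt: "p1 < a" "q1 < a" "p2 < b" "q2 < b" unfolding p1_p2_q1_q2_def
    using p q b by (auto simp: less_mult_imp_div_less)
  have pe: "p = p1*b+p2" "q = q1*b+q2" unfolding p1_p2_q1_q2_def by auto
  have "(\<Sum>j<n. (adj (kron (K j) (1\<^sub>m b)) * kron (K j) (1\<^sub>m b))$$(p,q))
      = (\<Sum>j<n. (adj (K j) * K j)$$(p1,q1) * (if p2=q2 then 1 else 0))"
    unfolding pe
  proof (rule sum.cong[OF refl])
    fix j assume "j \<in> {..<n}"
    then have Kj: "K j \<in> carrier_mat (a' j) a" using K by auto
    show "(adj (kron (K j) (1\<^sub>m b)) * kron (K j) (1\<^sub>m b))$$(p1*b+p2, q1*b+q2)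
        = (adj (K j) * K j)$$(p1,q1) * (if p2=q2 then 1 else 0)"
      using adj_kron[OF Kj one_carrier_mat lt(1,2,3,4)] adj_one[OF lt(3,4)] by simp
  qed
  also have "\<dots> = msum n a a (\<lambda>j. adj (K j) * K j) $$ (p1,q1) * (if p2=q2 then 1 else 0)"
    using msum_index[OF lt(1,2)] by (simp add: sum_distrib_right)
  also have "\<dots> = (if p=q then 1 else 0)" unfolding S using lt eq_divmod[OF b, of p q]
    unfolding p1_p2_q1_q2_def by auto
  finally show ?thesis .
qed

lemma bob_id: assumes K: "\<forall>j<n. K j \<in> carrier_mat (b' j) b"
  and S: "msum n b b (\<lambda>j. adj (K j) * K j) = 1\<^sub>m b" and p: "p<a*b" and q: "q<a*b"
  shows "(\<Sum>j<n. (adj (kron (1\<^sub>m a) (K j)) * kron (1\<^sub>m a) (K j))$$(p,q)) = (if p=q then 1 else 0)"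
proof -
  have b: "0 < b" using p by (cases b, auto)
  define p1 p2 q1 q2 where "p1 = p div b" "p2 = p mod b" "q1 = q div b" "q2 = q mod b"
  have lt: "p1 < a" "q1 < a" "p2 < b" "q2 < b" unfolding p1_p2_q1_q2_def
    using p q b by (auto simp: less_mult_imp_div_less)
  have pe: "p = p1*b+p2" "q = q1*b+q2" unfolding p1_p2_q1_q2_def by auto
  have "(\<Sum>j<n. (adj (kron (1\<^sub>m a) (K j)) * kron (1\<^sub>m a) (K j))$$(p,q))
      = (\<Sum>j<n. (if p1=q1 then 1 else 0) * (adj (K j) * K j)$$(p2,q2))"
    unfolding pe
  proof (rule sum.cong[OF refl])
    fix j assume "j \<in> {..<n}"
    then have Kj: "K j \<in> carrier_mat (b' j) b" using K by auto
    show "(adj (kron (1\<^sub>m a) (K j)) * kron (1\<^sub>m a) (K j))$$(p1*b+p2, q1*b+q2)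
        = (if p1=q1 then 1 else 0) * (adj (K j) * K j)$$(p2,q2)"
      using adj_kron[OF one_carrier_mat Kj lt(1,2,3,4)] adj_one[OF lt(1,2)] by simp
  qed
  also have "\<dots> = (if p1=q1 then 1 else 0) * msum n b b (\<lambda>j. adj (K j) * K j) $$ (p2,q2)"
    using msum_index[OF lt(3,4)] by (simp add: sum_distrib_left)
  also have "\<dots> = (if p=q then 1 else 0)" unfolding S using lt eq_divmod[OF b, of p q]
    unfolding p1_p2_q1_q2_def by auto
  finally show ?thesis .
qed


lemma LOCC_psd: "LOCC a b a2 b2 L \<Longrightarrow> \<forall>X. psd (a*b) X \<longrightarrow> psd (a2*b2) (L X) \<and> mtrace (L X) = mtrace X"
proof (induction rule: LOCC.induct)
  case (LOCC_id a b)
  then show ?case by simp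
next
  case (LOCC_Alice n K a' a b a'' b'' L)
  show ?case
  proof (intro allI impI)
    fix X assume X: "psd (a*b) X"
    have Xc: "X \<in> carrier_mat (a*b) (a*b)" using psd_carrier[OF X] .
    define M where "M j = kron (K j) (1\<^sub>m b)" for j
    have Mc: "\<forall>j<n. M j \<in> carrier_mat (a' j * b) (a*b)"
    proof (intro allI impI)
      fix j assume "j<n"
      then have "K j \<in> carrier_mat (a' j) a" using LOCC_Alice.hyps(1) by auto
      then show "M j \<in> carrier_mat (a' j * b) (a*b)" unfolding M_def using kron_carrier[of "K j" "1\<^sub>m b"] by auto
    qed
    have Y: "\<And>j. j<n \<Longrightarrow> psd (a' j * b) (M j * X * adj (M j))"
      using psd_conj[OF _ X] Mc by auto
    have IH: "\<And>j. j<n \<Longrightarrow> psd (a''*b'') (L j (M j * X * adj (M j))) \<and>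
        mtrace (L j (M j * X * adj (M j))) = mtrace (M j * X * adj (M j))"
      using LOCC_Alice.IH Y by blast
    show "psd (a''*b'') (msum n (a''*b'') (a''*b'') (\<lambda>j. L j (kron (K j) (1\<^sub>m b) * X * adj (kron (K j) (1\<^sub>m b))))) \<and>
       mtrace (msum n (a''*b'') (a''*b'') (\<lambda>j. L j (kron (K j) (1\<^sub>m b) * X * adj (kron (K j) (1\<^sub>m b))))) = mtrace X"
      unfolding M_def[symmetric]
    proof
      show "psd (a''*b'') (msum n (a''*b'') (a''*b'') (\<lambda>j. L j (M j * X * adj (M j))))"
        by (rule psd_msum, use IH in auto)
      have "mtrace (msum n (a''*b'') (a''*b'') (\<lambda>j. L j (M j * X * adj (M j))))
          = (\<Sum>j<n. mtrace (L j (M j * X * adj (M j))))"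
        by (rule mtrace_msum, use IH psd_carrier in auto)
      also have "\<dots> = (\<Sum>j<n. mtrace (M j * X * adj (M j)))" using IH by auto
      also have "\<dots> = mtrace X"
        by (rule tr_sum[OF Xc Mc], unfold M_def, use alice_id[OF LOCC_Alice.hyps(1,2)] in auto)
      finally show "mtrace (msum n (a''*b'') (a''*b'') (\<lambda>j. L j (M j * X * adj (M j)))) = mtrace X" .
    qed
  qed
next
  case (LOCC_Bob n K b' b a a'' b'' L)
  show ?case
  proof (intro allI impI)
    fix X assume X: "psd (a*b) X"
    have Xc: "X \<in> carrier_mat (a*b) (a*b)" using psd_carrier[OF X] .
    define M where "M j = kron (1\<^sub>m a) (K j)" for j
    have Mc: "\<forall>j<n. M j \<in> carrier_mat (a * b' j) (a*b)"
    proof (intro allI impI)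
      fix j assume "j<n"
      then have "K j \<in> carrier_mat (b' j) b" using LOCC_Bob.hyps(1) by auto
      then show "M j \<in> carrier_mat (a * b' j) (a*b)" unfolding M_def using kron_carrier[of "1\<^sub>m a" "K j"] by auto
    qed
    have Y: "\<And>j. j<n \<Longrightarrow> psd (a * b' j) (M j * X * adj (M j))"
      using psd_conj[OF _ X] Mc by auto
    have IH: "\<And>j. j<n \<Longrightarrow> psd (a''*b'') (L j (M j * X * adj (M j))) \<and>
        mtrace (L j (M j * X * adj (M j))) = mtrace (M j * X * adj (M j))"
      using LOCC_Bob.IH Y by blast
    show "psd (a''*b'') (msum n (a''*b'') (a''*b'') (\<lambda>j. L j (kron (1\<^sub>m a) (K j) * X * adj (kron (1\<^sub>m a) (K j))))) \<and>
       mtrace (msum n (a''*b'') (a''*b'') (\<lambda>j. L j (kron (1\<^sub>m a) (K j) * X * adj (kron (1\<^sub>m a) (K j))))) = mtrace X"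
      unfolding M_def[symmetric]
    proof
      show "psd (a''*b'') (msum n (a''*b'') (a''*b'') (\<lambda>j. L j (M j * X * adj (M j))))"
        by (rule psd_msum, use IH in auto)
      have "mtrace (msum n (a''*b'') (a''*b'') (\<lambda>j. L j (M j * X * adj (M j))))
          = (\<Sum>j<n. mtrace (L j (M j * X * adj (M j))))"
        by (rule mtrace_msum, use IH psd_carrier in auto)
      also have "\<dots> = (\<Sum>j<n. mtrace (M j * X * adj (M j)))" using IH by auto
      also have "\<dots> = mtrace X"
        by (rule tr_sum[OF Xc Mc], unfold M_def, use bob_id[OF LOCC_Bob.hyps(1,2)] in auto)
      finally show "mtrace (msum n (a''*b'') (a''*b'') (\<lambda>j. L j (M j * X * adj (M j)))) = mtrace X" .
    qed
  qed
qed


lemma psd_proj: assumes "\<psi> \<in> carrier_vec N" shows "psd N (proj \<psi>)"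
  unfolding psd_def Let_def
proof (intro conjI ballI)
  show "proj \<psi> \<in> carrier_mat N N" using assms unfolding proj_def by auto
  fix v :: "complex vec" assume v: "v \<in> carrier_vec N"
  have P: "proj \<psi> \<in> carrier_mat N N" using assms unfolding proj_def by auto
  define z where "z = (\<Sum>i<N. cnj (v$i) * \<psi>$i)"
  have cz: "cnj z = (\<Sum>k<N. cnj (\<psi>$k) * v$k)" unfolding z_def by (simp add: cnj_sum mult.commute)
  have "(\<Sum>i<N. cnj (v $ i) * (proj \<psi> *\<^sub>v v) $ i) = (\<Sum>i<N. cnj (v $ i) * (\<psi>$i * cnj z))"
  proof (rule sum.cong[OF refl])
    fix i assume "i \<in> {..<N}" then have i: "i<N" by simp
    have "(proj \<psi> *\<^sub>v v) $ i = (\<Sum>k<N. proj \<psi> $$ (i,k) * v$k)" using mv[OF P _ i] v by auto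
    also have "\<dots> = (\<Sum>k<N. \<psi>$i * (cnj (\<psi>$k) * v$k))"
      using assms i by (intro sum.cong refl, auto simp: proj_def)
    also have "\<dots> = \<psi>$i * cnj z" unfolding cz by (simp add: sum_distrib_left)
    finally show "cnj (v $ i) * (proj \<psi> *\<^sub>v v) $ i = cnj (v $ i) * (\<psi>$i * cnj z)" by simp
  qed
  also have "\<dots> = z * cnj z" unfolding z_def by (simp add: sum_distrib_right mult_ac)
  also have "\<dots> = of_real (cmod z ^ 2)" by (rule complex_norm_square[symmetric])
  finally have q: "(\<Sum>i<N. cnj (v $ i) * (proj \<psi> *\<^sub>v v) $ i) = of_real (cmod z ^ 2)" .
  show "(\<Sum>i<N. cnj (v $ i) * (proj \<psi> *\<^sub>v v) $ i) \<in> \<real>" unfolding q by simp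
  show "0 \<le> Re (\<Sum>i<N. cnj (v $ i) * (proj \<psi> *\<^sub>v v) $ i)" unfolding q by simp
qed

lemma mtrace_proj: "mtrace (proj \<psi>) = of_real (\<Sum>i<dim_vec \<psi>. cmod (\<psi>$i) ^ 2)"
proof -
  have "mtrace (proj \<psi>) = (\<Sum>i<dim_vec \<psi>. \<psi>$i * cnj (\<psi>$i))" unfolding mtrace_def proj_def by simp
  also have "\<dots> = (\<Sum>i<dim_vec \<psi>. of_real (cmod (\<psi>$i) ^ 2))" by (simp only: complex_norm_square)
  also have "\<dots> = of_real (\<Sum>i<dim_vec \<psi>. cmod (\<psi>$i) ^ 2)" by (rule of_real_sum[symmetric])
  finally show ?thesis .
qed

lemma channel_dim: "quantum_channel d \<Lambda> \<Longrightarrow> dim_row (\<Lambda> (0\<^sub>m d d)) = d"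
  unfolding quantum_channel_def by (metis carrier_matD(1) zero_carrier_mat)

lemma block_carrier: "block b X i j \<in> carrier_mat b b" unfolding block_def by auto

lemma id_tensor_carrier: "quantum_channel d \<Lambda> \<Longrightarrow> id_tensor a d \<Lambda> X \<in> carrier_mat (a*d) (a*d)"
  unfolding id_tensor_def Let_def channel_dim by (auto simp: channel_dim)

lemma id_tensor_index: assumes "quantum_channel d \<Lambda>" "i<a" "j<a" "k<d" "l<d"
  shows "id_tensor a d \<Lambda> X $$ (i*d+k, j*d+l) = \<Lambda> (block d X i j) $$ (k,l)"
  unfolding id_tensor_def Let_def channel_dim[OF assms(1)] using assms(2-5)
  by (subst index_mat, auto simp: idx_lt)

lemma mtrace_id_tensor: assumes ch: "quantum_channel d \<Lambda>" and X: "X \<in> carrier_mat (a*d) (a*d)"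
  shows "mtrace (id_tensor a d \<Lambda> X) = mtrace X"
proof -
  have dr: "dim_row (id_tensor a d \<Lambda> X) = a*d" using id_tensor_carrier[OF ch] by auto
  have "mtrace (id_tensor a d \<Lambda> X) = (\<Sum>i<a. \<Sum>k<d. id_tensor a d \<Lambda> X $$ (i*d+k, i*d+k))"
    unfolding mtrace_def dr by (rule sum_split)
  also have "\<dots> = (\<Sum>i<a. \<Sum>k<d. \<Lambda> (block d X i i) $$ (k,k))"
    by (intro sum.cong refl, simp add: id_tensor_index[OF ch])
  also have "\<dots> = (\<Sum>i<a. mtrace (\<Lambda> (block d X i i)))"
  proof (intro sum.cong refl)
    fix i
    have "\<Lambda> (block d X i i) \<in> carrier_mat d d" using ch block_carrier unfolding quantum_channel_def by auto
    then show "(\<Sum>k<d. \<Lambda> (block d X i i) $$ (k,k)) = mtrace (\<Lambda> (block d X i i))" unfolding mtrace_def by auto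
  qed
  also have "\<dots> = (\<Sum>i<a. mtrace (block d X i i))"
    using ch block_carrier unfolding quantum_channel_def by auto
  also have "\<dots> = (\<Sum>i<a. \<Sum>k<d. X $$ (i*d+k, i*d+k))"
    unfolding mtrace_def block_def by auto
  also have "\<dots> = mtrace X" unfolding mtrace_def using X sum_split[symmetric] by auto
  finally show ?thesis .
qed

lemma rho_state_good: assumes ch: "quantum_channel d \<Lambda>" and u: "unit_vector (d*d) \<psi>"
  shows "psd (d*d) (rho_state d \<psi> \<Lambda>) \<and> mtrace (rho_state d \<psi> \<Lambda>) = 1"
proof -
  have pc: "\<psi> \<in> carrier_vec (d*d)" using u unfolding unit_vector_def by auto
  have P: "psd (d*d) (proj \<psi>)" by (rule psd_proj[OF pc])
  have "psd (d*d) (id_tensor d d \<Lambda> (proj \<psi>))" using ch P unfolding quantum_channel_def by blast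
  moreover have "mtrace (id_tensor d d \<Lambda> (proj \<psi>)) = 1"
    using mtrace_id_tensor[OF ch psd_carrier[OF P]] mtrace_proj[of \<psi>] u pc unfolding unit_vector_def by auto
  ultimately show ?thesis unfolding rho_state_def by auto
qed


fun lsum :: "nat \<Rightarrow> nat \<Rightarrow> (nat \<Rightarrow> complex mat) \<Rightarrow> complex mat" where
  "lsum n 0 f = 0\<^sub>m n n"
| "lsum n (Suc m) f = lsum n m f + f m"

lemma lsum_carrier: "\<forall>t<m. f t \<in> carrier_mat n n \<Longrightarrow> lsum n m f \<in> carrier_mat n n"
  by (induction m) auto

lemma lsum_index: "\<forall>t<m. f t \<in> carrier_mat n n \<Longrightarrow> i<n \<Longrightarrow> j<n \<Longrightarrow>
  lsum n m f $$ (i,j) = (\<Sum>t<m. f t $$ (i,j))"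
proof (induction m)
  case 0 then show ?case by simp
next
  case (Suc m)
  have c: "lsum n m f \<in> carrier_mat n n" using lsum_carrier Suc.prems(1) by auto
  have fm: "f m \<in> carrier_mat n n" using Suc.prems(1) by auto
  have e: "(lsum n m f + f m) $$ (i,j) = lsum n m f $$ (i,j) + f m $$ (i,j)"
    using fm Suc.prems by (intro index_add_mat) auto
  have IH': "lsum n m f $$ (i,j) = (\<Sum>t<m. f t $$ (i,j))" using Suc.IH Suc.prems by auto
  show ?case unfolding lsum.simps(2) sum.lessThan_Suc e IH' ..
qed

lemma smult_one_mat: "1 \<cdot>\<^sub>m (A::complex mat) = A" by (rule eq_matI) auto

lemma unit_mat_carrier: "unit_mat n k l \<in> carrier_mat n n" unfolding unit_mat_def by auto

lemma lin_lsum: assumes ch: "quantum_channel n \<Lambda>" and A: "\<forall>t<m. A t \<in> carrier_mat n n"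
  shows "\<Lambda> (lsum n m (\<lambda>t. c t \<cdot>\<^sub>m A t)) = lsum n m (\<lambda>t. c t \<cdot>\<^sub>m \<Lambda> (A t))"
  using A
proof (induction m)
  case 0
  have Z: "0\<^sub>m n n \<in> carrier_mat n n" by simp
  have L: "\<forall>X\<in>carrier_mat n n. \<forall>Y\<in>carrier_mat n n. \<forall>s t::complex.
         \<Lambda> (s \<cdot>\<^sub>m X + t \<cdot>\<^sub>m Y) = s \<cdot>\<^sub>m \<Lambda> X + t \<cdot>\<^sub>m \<Lambda> Y" using ch unfolding quantum_channel_def by blast
  have C: "\<Lambda> (0\<^sub>m n n) \<in> carrier_mat n n" using ch Z unfolding quantum_channel_def by blast
  have e1: "0 \<cdot>\<^sub>m 0\<^sub>m n n + 0 \<cdot>\<^sub>m 0\<^sub>m n n = (0\<^sub>m n n :: complex mat)" by (rule eq_matI) auto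
  have e2: "0 \<cdot>\<^sub>m \<Lambda> (0\<^sub>m n n) + 0 \<cdot>\<^sub>m \<Lambda> (0\<^sub>m n n) = (0\<^sub>m n n :: complex mat)" using C by (intro eq_matI) auto
  have "\<Lambda> (0 \<cdot>\<^sub>m 0\<^sub>m n n + 0 \<cdot>\<^sub>m 0\<^sub>m n n) = 0 \<cdot>\<^sub>m \<Lambda> (0\<^sub>m n n) + 0 \<cdot>\<^sub>m \<Lambda> (0\<^sub>m n n)"
    using L Z by blast
  then show ?case using e1 e2 by simp
next
  case (Suc m)
  have L: "\<forall>X\<in>carrier_mat n n. \<forall>Y\<in>carrier_mat n n. \<forall>s t::complex.
         \<Lambda> (s \<cdot>\<^sub>m X + t \<cdot>\<^sub>m Y) = s \<cdot>\<^sub>m \<Lambda> X + t \<cdot>\<^sub>m \<Lambda> Y" using ch unfolding quantum_channel_def by blast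
  have c: "lsum n m (\<lambda>t. c t \<cdot>\<^sub>m A t) \<in> carrier_mat n n" using lsum_carrier Suc.prems by auto
  have Am: "A m \<in> carrier_mat n n" using Suc.prems by auto
  have "\<Lambda> (lsum n (Suc m) (\<lambda>t. c t \<cdot>\<^sub>m A t)) = \<Lambda> (1 \<cdot>\<^sub>m lsum n m (\<lambda>t. c t \<cdot>\<^sub>m A t) + c m \<cdot>\<^sub>m A m)"
    by (simp add: smult_one_mat)
  also have "\<dots> = 1 \<cdot>\<^sub>m \<Lambda> (lsum n m (\<lambda>t. c t \<cdot>\<^sub>m A t)) + c m \<cdot>\<^sub>m \<Lambda> (A m)" using L c Am by blast
  also have "\<dots> = lsum n (Suc m) (\<lambda>t. c t \<cdot>\<^sub>m \<Lambda> (A t))" using Suc by (simp add: smult_one_mat)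
  finally show ?case .
qed

lemma channel_expand: assumes ch: "quantum_channel n \<Lambda>" and X: "X \<in> carrier_mat n n"
  and i: "i<n" and j: "j<n"
  shows "\<Lambda> X $$ (i,j) = (\<Sum>k<n. \<Sum>l<n. X$$(k,l) * \<Lambda> (unit_mat n k l) $$ (i,j))"
proof -
  define c where "c t = X$$(t div n, t mod n)" for t
  define A where "A t = unit_mat n (t div n) (t mod n)" for t
  have Ac: "\<forall>t<n*n. A t \<in> carrier_mat n n" unfolding A_def using unit_mat_carrier by auto
  have sc: "\<forall>t<n*n. c t \<cdot>\<^sub>m A t \<in> carrier_mat n n" using Ac by auto
  have XL: "X = lsum n (n*n) (\<lambda>t. c t \<cdot>\<^sub>m A t)"
  proof (rule eq_matI)
    show "dim_row X = dim_row (lsum n (n*n) (\<lambda>t. c t \<cdot>\<^sub>m A t))" "dim_col X = dim_col (lsum n (n*n) (\<lambda>t. c t \<cdot>\<^sub>m A t))"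
      using lsum_carrier[OF sc] X by auto
    fix a b assume "a < dim_row (lsum n (n*n) (\<lambda>t. c t \<cdot>\<^sub>m A t))" "b < dim_col (lsum n (n*n) (\<lambda>t. c t \<cdot>\<^sub>m A t))"
    then have a: "a<n" and b: "b<n" using lsum_carrier[OF sc] by auto
    have "lsum n (n*n) (\<lambda>t. c t \<cdot>\<^sub>m A t) $$ (a,b) = (\<Sum>t<n*n. (c t \<cdot>\<^sub>m A t) $$ (a,b))"
      by (rule lsum_index[OF sc a b])
    also have "\<dots> = (\<Sum>k<n. \<Sum>l<n. (c (k*n+l) \<cdot>\<^sub>m A (k*n+l)) $$ (a,b))" by (rule sum_split)
    also have "\<dots> = (\<Sum>k<n. \<Sum>l<n. if k = a then (if l = b then X$$(k,l) else 0) else 0)"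
      using a b by (intro sum.cong refl, auto simp: c_def A_def unit_mat_def)
    also have "\<dots> = (\<Sum>k<n. if k = a then X$$(k,b) else 0)"
      using b by (intro sum.cong refl) auto
    also have "\<dots> = X $$ (a,b)" using a by simp
    finally show "X $$ (a,b) = lsum n (n*n) (\<lambda>t. c t \<cdot>\<^sub>m A t) $$ (a,b)" by simp
  qed
  have sc2: "\<forall>t<n*n. c t \<cdot>\<^sub>m \<Lambda> (A t) \<in> carrier_mat n n"
    using Ac ch unfolding quantum_channel_def by auto
  have "\<Lambda> X $$ (i,j) = lsum n (n*n) (\<lambda>t. c t \<cdot>\<^sub>m \<Lambda> (A t)) $$ (i,j)"
    using lin_lsum[OF ch Ac, of c] XL by simp
  also have "\<dots> = (\<Sum>t<n*n. (c t \<cdot>\<^sub>m \<Lambda> (A t)) $$ (i,j))" by (rule lsum_index[OF sc2 i j])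
  also have "\<dots> = (\<Sum>k<n. \<Sum>l<n. (c (k*n+l) \<cdot>\<^sub>m \<Lambda> (A (k*n+l))) $$ (i,j))" by (rule sum_split)
  also have "\<dots> = (\<Sum>k<n. \<Sum>l<n. X$$(k,l) * \<Lambda> (unit_mat n k l) $$ (i,j))"
  proof (intro sum.cong refl)
    fix k l assume "k \<in> {..<n}" "l \<in> {..<n}"
    then have kl: "k<n" "l<n" by auto
    have "\<Lambda> (unit_mat n k l) \<in> carrier_mat n n" using ch unit_mat_carrier unfolding quantum_channel_def by auto
    then show "(c (k*n+l) \<cdot>\<^sub>m \<Lambda> (A (k*n+l))) $$ (i,j) = X$$(k,l) * \<Lambda> (unit_mat n k l) $$ (i,j)"
      using kl i j by (simp add: c_def A_def)
  qed
  finally show ?thesis .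
qed


lemma delta_sum: "k<(n::nat) \<Longrightarrow> (\<And>i. i<n \<Longrightarrow> i \<noteq> k \<Longrightarrow> g i = (0::complex)) \<Longrightarrow> (\<Sum>i<n. g i) = g k"
proof -
  assume k: "k<n" and z: "\<And>i. i<n \<Longrightarrow> i \<noteq> k \<Longrightarrow> g i = 0"
  have "(\<Sum>i<n. g i) = (\<Sum>i<n. if i = k then g k else 0)" using z by (intro sum.cong refl) auto
  then show ?thesis using k by simp
qed

lemma Q4: assumes Y: "Y \<in> carrier_mat (n*n) (n*n)" and u: "dim_vec u = n*n"
  shows "(\<Sum>r<n*n. cnj (u$r) * (Y *\<^sub>v u)$r) =
    (\<Sum>k<n. \<Sum>i<n. \<Sum>l<n. \<Sum>j<n. cnj (u$(k*n+i)) * Y$$(k*n+i, l*n+j) * u$(l*n+j))"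
proof -
  have e: "(Y *\<^sub>v u)$r = (\<Sum>l<n. \<Sum>j<n. Y$$(r, l*n+j) * u$(l*n+j))" if r: "r<n*n" for r
  proof -
    have "(Y *\<^sub>v u)$r = (\<Sum>c<n*n. Y$$(r,c) * u$c)" by (rule mv[OF Y u r])
    also have "\<dots> = (\<Sum>l<n. \<Sum>j<n. Y$$(r, l*n+j) * u$(l*n+j))" by (rule sum_split)
    finally show ?thesis .
  qed
  have "(\<Sum>r<n*n. cnj (u$r) * (Y *\<^sub>v u)$r) = (\<Sum>k<n. \<Sum>i<n. cnj (u$(k*n+i)) * (Y *\<^sub>v u)$(k*n+i))"
    by (rule sum_split)
  also have "\<dots> = (\<Sum>k<n. \<Sum>i<n. \<Sum>l<n. \<Sum>j<n. cnj (u$(k*n+i)) * Y$$(k*n+i, l*n+j) * u$(l*n+j))"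
  proof (rule sum.cong[OF refl], rule sum.cong[OF refl])
    fix k i assume "k \<in> {..<n}" "i \<in> {..<n}"
    then have r: "k*n+i < n*n" using idx_lt by auto
    show "cnj (u$(k*n+i)) * (Y *\<^sub>v u)$(k*n+i) = (\<Sum>l<n. \<Sum>j<n. cnj (u$(k*n+i)) * Y$$(k*n+i, l*n+j) * u$(l*n+j))"
      unfolding e[OF r] sum_distrib_left by (simp only: mult.assoc)
  qed
  finally show ?thesis .
qed

definition swapc :: "nat \<Rightarrow> complex vec \<Rightarrow> complex vec" where
  "swapc n \<chi> = vec (n*n) (\<lambda>r. cnj (\<chi> $ ((r mod n)*n + r div n)))"

lemma swapc_idx: "k<n \<Longrightarrow> a<n \<Longrightarrow> swapc n \<chi> $ (k*n+a) = cnj (\<chi> $ (a*n+k))"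
  unfolding swapc_def by (simp add: idx_lt)

lemma swapc_unit: assumes "unit_vector (n*n) \<chi>" shows "unit_vector (n*n) (swapc n \<chi>)"
proof -
  have "(\<Sum>r<n*n. cmod (swapc n \<chi> $ r) ^ 2) = (\<Sum>k<n. \<Sum>a<n. cmod (swapc n \<chi> $ (k*n+a)) ^ 2)"
    by (rule sum_split)
  also have "\<dots> = (\<Sum>k<n. \<Sum>a<n. cmod (\<chi> $ (a*n+k)) ^ 2)"
    by (intro sum.cong refl, simp add: swapc_idx)
  also have "\<dots> = (\<Sum>a<n. \<Sum>k<n. cmod (\<chi> $ (a*n+k)) ^ 2)" by (rule sum.swap)
  also have "\<dots> = (\<Sum>r<n*n. cmod (\<chi> $ r) ^ 2)" by (rule sum_split[symmetric])
  also have "\<dots> = 1" using assms unfolding unit_vector_def by simp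
  finally show ?thesis unfolding unit_vector_def swapc_def by simp
qed

definition c0 :: "nat \<Rightarrow> complex" where "c0 n = 1 / complex_of_real (sqrt (real n))"

lemma c0_cnj: "cnj (c0 n) = c0 n" unfolding c0_def by simp

lemma c0_sq: "0 < n \<Longrightarrow> cnj (c0 n) * c0 n = 1 / of_nat n"
proof -
  assume n: "0<n"
  have "complex_of_real (sqrt (real n)) * complex_of_real (sqrt (real n)) = of_real (real n)"
  proof -
    have s: "sqrt (real n) * sqrt (real n) = real n" by simp
    show ?thesis unfolding of_real_mult[symmetric] s ..
  qed
  then show ?thesis unfolding c0_cnj unfolding c0_def by (simp add: divide_simps)
qed

lemma pp_dim: "dim_vec (phi_plus n) = n*n" unfolding phi_plus_def by simp

lemma pp_idx: "k<n \<Longrightarrow> i<n \<Longrightarrow> phi_plus n $ (k*n+i) = (if k = i then c0 n else 0)"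
  unfolding phi_plus_def c0_def by (simp add: idx_lt)

lemma Q_pp: assumes Y: "Y \<in> carrier_mat (n*n) (n*n)" and n: "0<n"
  shows "(\<Sum>r<n*n. cnj (phi_plus n $r) * (Y *\<^sub>v phi_plus n)$r) =
    (\<Sum>k<n. \<Sum>l<n. 1 / of_nat n * Y$$(k*n+k, l*n+l))"
proof -
  let ?u = "phi_plus n"
  have "(\<Sum>r<n*n. cnj (?u $r) * (Y *\<^sub>v ?u)$r) =
    (\<Sum>k<n. \<Sum>i<n. \<Sum>l<n. \<Sum>j<n. cnj (?u$(k*n+i)) * Y$$(k*n+i, l*n+j) * ?u$(l*n+j))"
    by (rule Q4[OF Y pp_dim])
  also have "\<dots> = (\<Sum>k<n. \<Sum>l<n. \<Sum>j<n. cnj (?u$(k*n+k)) * Y$$(k*n+k, l*n+j) * ?u$(l*n+j))"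
  proof (rule sum.cong[OF refl])
    fix k assume "k \<in> {..<n}" then have k: "k<n" by simp
    show "(\<Sum>i<n. \<Sum>l<n. \<Sum>j<n. cnj (?u$(k*n+i)) * Y$$(k*n+i, l*n+j) * ?u$(l*n+j))
      = (\<Sum>l<n. \<Sum>j<n. cnj (?u$(k*n+k)) * Y$$(k*n+k, l*n+j) * ?u$(l*n+j))"
      by (rule delta_sum[OF k], simp add: pp_idx k)
  qed
  also have "\<dots> = (\<Sum>k<n. \<Sum>l<n. cnj (?u$(k*n+k)) * Y$$(k*n+k, l*n+l) * ?u$(l*n+l))"
  proof (rule sum.cong[OF refl], rule sum.cong[OF refl])
    fix k l assume "k \<in> {..<n}" "l \<in> {..<n}" then have k: "k<n" and l: "l<n" by auto
    show "(\<Sum>j<n. cnj (?u$(k*n+k)) * Y$$(k*n+k, l*n+j) * ?u$(l*n+j))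
      = cnj (?u$(k*n+k)) * Y$$(k*n+k, l*n+l) * ?u$(l*n+l)"
      by (rule delta_sum[OF l], simp add: pp_idx l)
  qed
  also have "\<dots> = (\<Sum>k<n. \<Sum>l<n. 1 / of_nat n * Y$$(k*n+k, l*n+l))"
  proof (intro sum.cong refl)
    fix k l assume "k \<in> {..<n}" "l \<in> {..<n}" then have k: "k<n" and l: "l<n" by auto
    show "cnj (?u$(k*n+k)) * Y$$(k*n+k, l*n+l) * ?u$(l*n+l) = 1 / of_nat n * Y$$(k*n+k, l*n+l)"
    proof -
      have "cnj (?u$(k*n+k)) * Y$$(k*n+k, l*n+l) * ?u$(l*n+l) = (cnj (c0 n) * c0 n) * Y$$(k*n+k, l*n+l)"
        by (simp add: pp_idx k l mult_ac)
      then show ?thesis unfolding c0_sq[OF n] .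
    qed
  qed
  finally show ?thesis .
qed

lemma pp_max_ent: assumes n: "0<n" shows "max_entangled n (phi_plus n)"
  unfolding max_entangled_def
proof
  have "(\<Sum>r<n*n. cmod (phi_plus n $ r) ^ 2) = (\<Sum>k<n. \<Sum>i<n. cmod (phi_plus n $ (k*n+i)) ^ 2)"
    by (rule sum_split)
  also have "\<dots> = (\<Sum>k<n. cmod (c0 n) ^ 2)"
  proof (intro sum.cong refl)
    fix k assume "k \<in> {..<n}" then have k: "k<n" by simp
    have "(\<Sum>i<n. cmod (phi_plus n $ (k*n+i)) ^ 2) = (\<Sum>i<n. if i = k then cmod (c0 n) ^ 2 else 0)"
      by (intro sum.cong refl, auto simp: pp_idx k)
    then show "(\<Sum>i<n. cmod (phi_plus n $ (k*n+i)) ^ 2) = cmod (c0 n) ^ 2" using k by simp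
  qed
  also have "\<dots> = 1" using n unfolding c0_def
    by (simp add: norm_divide power_divide)
  finally show "unit_vector (n*n) (phi_plus n)" unfolding unit_vector_def by (simp add: phi_plus_def)
  show "ptrace_B n n (proj (phi_plus n)) = (1 / of_nat n) \<cdot>\<^sub>m 1\<^sub>m n"
  proof (rule eq_matI)
    fix i j assume "i < dim_row ((1 / of_nat n) \<cdot>\<^sub>m 1\<^sub>m n :: complex mat)" "j < dim_col ((1 / of_nat n) \<cdot>\<^sub>m 1\<^sub>m n :: complex mat)"
    then have i: "i<n" and j: "j<n" by auto
    have "ptrace_B n n (proj (phi_plus n)) $$ (i,j) = (\<Sum>k<n. phi_plus n $ (i*n+k) * cnj (phi_plus n $ (j*n+k)))"
      unfolding ptrace_B_def proj_def using i j by (simp add: idx_lt pp_dim)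
    also have "\<dots> = phi_plus n $ (i*n+i) * cnj (phi_plus n $ (j*n+i))"
      by (rule delta_sum[OF i], simp add: pp_idx i)
    also have "\<dots> = (if i = j then 1 / of_nat n else 0)"
      using c0_sq[OF n] i j by (simp add: pp_idx mult.commute)
    finally show "ptrace_B n n (proj (phi_plus n)) $$ (i,j) = ((1 / of_nat n) \<cdot>\<^sub>m 1\<^sub>m n) $$ (i,j)"
      using i j by simp
  qed (auto simp: ptrace_B_def)
qed


lemma key: assumes ch: "quantum_channel n \<Lambda>" and n: "0<n" and \<chi>: "\<chi> \<in> carrier_vec (n*n)"
  shows "(\<Sum>r<n*n. cnj (phi_plus n $r) * (rho_state n (swapc n \<chi>) \<Lambda> *\<^sub>v phi_plus n)$r)
       = (\<Sum>r<n*n. cnj (\<chi> $r) * (rho_state n (phi_plus n) \<Lambda> *\<^sub>v \<chi>)$r)"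
proof -
  define F where "F a b i j = \<Lambda> (unit_mat n a b) $$ (i,j)" for a b i j
  define g where "g K I L J = cnj (\<chi>$(K*n+I)) * (1 / of_nat n * F K L I J) * \<chi>$(L*n+J)" for K I L J
  let ?\<psi> = "swapc n \<chi>"
  have \<psi>d: "dim_vec ?\<psi> = n*n" unfolding swapc_def by simp
  have \<sigma>c: "rho_state n ?\<psi> \<Lambda> \<in> carrier_mat (n*n) (n*n)" unfolding rho_state_def by (rule id_tensor_carrier[OF ch])
  have \<rho>c: "rho_state n (phi_plus n) \<Lambda> \<in> carrier_mat (n*n) (n*n)" unfolding rho_state_def by (rule id_tensor_carrier[OF ch])
  have \<sigma>e: "\<And>k l. k<n \<Longrightarrow> l<n \<Longrightarrow> rho_state n ?\<psi> \<Lambda> $$ (k*n+k, l*n+l)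
      = (\<Sum>a<n. \<Sum>b<n. cnj (\<chi>$(a*n+k)) * \<chi>$(b*n+l) * F a b k l)"
  proof -
    fix k l assume k: "k<n" and l: "l<n"
    have "rho_state n ?\<psi> \<Lambda> $$ (k*n+k, l*n+l) = \<Lambda> (block n (proj ?\<psi>) k l) $$ (k,l)"
      unfolding rho_state_def by (rule id_tensor_index[OF ch k l k l])
    also have "\<dots> = (\<Sum>a<n. \<Sum>b<n. block n (proj ?\<psi>) k l $$ (a,b) * F a b k l)"
      unfolding F_def by (rule channel_expand[OF ch block_carrier k l])
    also have "\<dots> = (\<Sum>a<n. \<Sum>b<n. cnj (\<chi>$(a*n+k)) * \<chi>$(b*n+l) * F a b k l)"
      by (intro sum.cong refl, simp add: block_def proj_def \<psi>d idx_lt k l swapc_idx)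
    finally show "rho_state n ?\<psi> \<Lambda> $$ (k*n+k, l*n+l) = (\<Sum>a<n. \<Sum>b<n. cnj (\<chi>$(a*n+k)) * \<chi>$(b*n+l) * F a b k l)" .
  qed
  have \<rho>e: "\<And>k i l j. k<n \<Longrightarrow> i<n \<Longrightarrow> l<n \<Longrightarrow> j<n \<Longrightarrow> rho_state n (phi_plus n) \<Lambda> $$ (k*n+i, l*n+j)
      = 1 / of_nat n * F k l i j"
  proof -
    fix k i l j assume k: "k<n" and i: "i<n" and l: "l<n" and j: "j<n"
    let ?u = "phi_plus n"
    have "rho_state n ?u \<Lambda> $$ (k*n+i, l*n+j) = \<Lambda> (block n (proj ?u) k l) $$ (i,j)"
      unfolding rho_state_def by (rule id_tensor_index[OF ch k l i j])
    also have "\<dots> = (\<Sum>a<n. \<Sum>b<n. block n (proj ?u) k l $$ (a,b) * F a b i j)"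
      unfolding F_def by (rule channel_expand[OF ch block_carrier i j])
    also have "\<dots> = (\<Sum>a<n. \<Sum>b<n. ?u$(k*n+a) * cnj (?u$(l*n+b)) * F a b i j)"
      by (intro sum.cong refl, simp add: block_def proj_def pp_dim idx_lt k l)
    also have "\<dots> = (\<Sum>b<n. ?u$(k*n+k) * cnj (?u$(l*n+b)) * F k b i j)"
      by (rule delta_sum[OF k], simp add: pp_idx k)
    also have "\<dots> = ?u$(k*n+k) * cnj (?u$(l*n+l)) * F k l i j"
      by (rule delta_sum[OF l], simp add: pp_idx l)
    also have "\<dots> = (cnj (c0 n) * c0 n) * F k l i j" by (simp add: pp_idx k l c0_cnj)
    also have "\<dots> = 1 / of_nat n * F k l i j" unfolding c0_sq[OF n] ..
    finally show "rho_state n ?u \<Lambda> $$ (k*n+i, l*n+j) = 1 / of_nat n * F k l i j" .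
  qed
  have "(\<Sum>r<n*n. cnj (phi_plus n $r) * (rho_state n ?\<psi> \<Lambda> *\<^sub>v phi_plus n)$r)
      = (\<Sum>k<n. \<Sum>l<n. 1 / of_nat n * rho_state n ?\<psi> \<Lambda> $$ (k*n+k, l*n+l))"
    by (rule Q_pp[OF \<sigma>c n])
  also have "\<dots> = (\<Sum>I<n. \<Sum>J<n. \<Sum>K<n. \<Sum>L<n. g K I L J)"
  proof (rule sum.cong[OF refl], rule sum.cong[OF refl])
    fix I J assume "I \<in> {..<n}" "J \<in> {..<n}" then have I: "I<n" and J: "J<n" by auto
    show "1 / of_nat n * rho_state n ?\<psi> \<Lambda> $$ (I*n+I, J*n+J) = (\<Sum>K<n. \<Sum>L<n. g K I L J)"
      unfolding \<sigma>e[OF I J] g_def by (simp add: sum_distrib_left mult_ac)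
  qed
  also have "\<dots> = (\<Sum>I<n. \<Sum>K<n. \<Sum>J<n. \<Sum>L<n. g K I L J)"
    by (rule sum.cong[OF refl], rule sum.swap)
  also have "\<dots> = (\<Sum>K<n. \<Sum>I<n. \<Sum>J<n. \<Sum>L<n. g K I L J)"
    by (rule sum.swap)
  also have "\<dots> = (\<Sum>K<n. \<Sum>I<n. \<Sum>L<n. \<Sum>J<n. g K I L J)"
    by (rule sum.cong[OF refl], rule sum.cong[OF refl], rule sum.swap)
  also have "\<dots> = (\<Sum>k<n. \<Sum>i<n. \<Sum>l<n. \<Sum>j<n. cnj (\<chi>$(k*n+i)) * rho_state n (phi_plus n) \<Lambda> $$ (k*n+i, l*n+j) * \<chi>$(l*n+j))"
  proof (rule sum.cong[OF refl], rule sum.cong[OF refl], rule sum.cong[OF refl], rule sum.cong[OF refl])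
    fix k i l j assume "k \<in> {..<n}" "i \<in> {..<n}" "l \<in> {..<n}" "j \<in> {..<n}"
    then have k: "k<n" and i: "i<n" and l: "l<n" and j: "j<n" by auto
    show "g k i l j = cnj (\<chi>$(k*n+i)) * rho_state n (phi_plus n) \<Lambda> $$ (k*n+i, l*n+j) * \<chi>$(l*n+j)"
      unfolding \<rho>e[OF k i l j] g_def ..
  qed
  also have "\<dots> = (\<Sum>r<n*n. cnj (\<chi> $r) * (rho_state n (phi_plus n) \<Lambda> *\<^sub>v \<chi>)$r)"
    by (rule Q4[OF \<rho>c, symmetric], use \<chi> in auto)
  finally show ?thesis .
qed


lemma nonzero_norm: assumes v: "v \<in> carrier_vec N" and nz: "v \<noteq> 0\<^sub>v N"
  shows "(\<Sum>i<N. cmod (v$i) ^ 2) > 0"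
proof -
  obtain i where i: "i<N" and vi: "v$i \<noteq> 0"
  proof -
    have "\<exists>i<N. v$i \<noteq> 0"
    proof (rule ccontr)
      assume "\<not> (\<exists>i<N. v$i \<noteq> 0)"
      then have "v = 0\<^sub>v N" using v by (intro eq_vecI) auto
      then show False using nz by simp
    qed
    then show ?thesis using that by blast
  qed
  have "cmod (v$i) ^ 2 \<le> (\<Sum>i<N. cmod (v$i) ^ 2)" by (rule member_le_sum, use i in auto)
  moreover have "cmod (v$i) ^ 2 > 0" using vi by simp
  ultimately show ?thesis by linarith
qed

lemma qf_eig: assumes v: "v \<in> carrier_vec N" and ev: "A *\<^sub>v v = k \<cdot>\<^sub>v v"
  shows "(\<Sum>i<N. cnj (v$i) * (A *\<^sub>v v)$i) = k * of_real (\<Sum>i<N. cmod (v$i) ^ 2)"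
proof -
  have "(\<Sum>i<N. cnj (v$i) * (A *\<^sub>v v)$i) = (\<Sum>i<N. k * (v$i * cnj (v$i)))"
    unfolding ev using v by (intro sum.cong refl) (auto simp: mult_ac)
  also have "\<dots> = (\<Sum>i<N. k * of_real (cmod (v$i) ^ 2))" by (simp only: complex_norm_square)
  also have "\<dots> = k * of_real (\<Sum>i<N. cmod (v$i) ^ 2)" by (simp add: sum_distrib_left of_real_sum)
  finally show ?thesis .
qed

lemma psd_eig_real: assumes P: "psd N \<rho>" and e: "eigenvalue \<rho> k" shows "k = of_real (Re k)"
proof -
  have \<rho>c: "\<rho> \<in> carrier_mat N N" using psd_carrier[OF P] .
  obtain v where "eigenvector \<rho> v k" using e unfolding eigenvalue_def by auto
  then have v: "v \<in> carrier_vec N" and nz: "v \<noteq> 0\<^sub>v N" and ev: "\<rho> *\<^sub>v v = k \<cdot>\<^sub>v v"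
    unfolding eigenvector_def using \<rho>c by auto
  define s where "s = (\<Sum>i<N. cmod (v$i) ^ 2)"
  have s: "s > 0" unfolding s_def by (rule nonzero_norm[OF v nz])
  have q: "(\<Sum>i<N. cnj (v$i) * (\<rho> *\<^sub>v v)$i) = k * of_real s" unfolding s_def by (rule qf_eig[OF v ev])
  have "(\<Sum>i<N. cnj (v$i) * (\<rho> *\<^sub>v v)$i) \<in> \<real>" using P v unfolding psd_def Let_def by blast
  then have "k * of_real s \<in> \<real>" using q by simp
  then have kr: "k * of_real s / of_real s \<in> \<real>" by (intro Reals_divide) auto
  have ks: "k * of_real s / of_real s = k" using s by simp
  have "k \<in> \<real>" using kr unfolding ks .
  then show ?thesis by (metis Re_complex_of_real Reals_cases)
qed

lemma eig: assumes P: "psd N \<rho>" and N: "0<N"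
  shows "\<exists>\<chi>. unit_vector N \<chi> \<and> Re (\<Sum>r<N. cnj (\<chi>$r) * (\<rho> *\<^sub>v \<chi>)$r) = lambda_max \<rho>"
proof -
  have \<rho>c: "\<rho> \<in> carrier_mat N N" using psd_carrier[OF P] .
  define E where "E = {x::real. eigenvalue \<rho> (complex_of_real x)}"
  have sub: "E \<subseteq> Re ` spectrum \<rho>" unfolding E_def spectrum_def by force
  have fin: "finite E" by (rule finite_subset[OF sub], rule finite_imageI, rule card_finite_spectrum(1)[OF \<rho>c])
  obtain k where k: "k \<in> spectrum \<rho>" using spectrum_non_empty[OF \<rho>c N] by auto
  then have "eigenvalue \<rho> k" unfolding spectrum_def by auto
  then have "Re k \<in> E" unfolding E_def using psd_eig_real[OF P] by auto
  then have ne: "E \<noteq> {}" by auto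
  define lam where "lam = Max E"
  have lm: "lambda_max \<rho> = lam" unfolding lambda_max_def lam_def E_def ..
  have "lam \<in> E" unfolding lam_def by (rule Max_in[OF fin ne])
  then obtain v where "eigenvector \<rho> v (of_real lam)" unfolding E_def eigenvalue_def by auto
  then have v: "v \<in> carrier_vec N" and nz: "v \<noteq> 0\<^sub>v N" and ev: "\<rho> *\<^sub>v v = of_real lam \<cdot>\<^sub>v v"
    unfolding eigenvector_def using \<rho>c by auto
  define s where "s = (\<Sum>i<N. cmod (v$i) ^ 2)"
  have s: "s > 0" unfolding s_def by (rule nonzero_norm[OF v nz])
  define c where "c = complex_of_real (1 / sqrt s)"
  define \<chi> where "\<chi> = c \<cdot>\<^sub>v v"
  have \<chi>c: "\<chi> \<in> carrier_vec N" unfolding \<chi>_def using v by simp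
  have "(\<Sum>i<N. cmod (\<chi>$i) ^ 2) = (\<Sum>i<N. (1 / s) * cmod (v$i) ^ 2)"
  proof (rule sum.cong[OF refl])
    fix i assume "i \<in> {..<N}"
    then have i: "i<N" by simp
    have "cmod (\<chi>$i) = cmod (v$i) / sqrt s" unfolding \<chi>_def c_def using v i s by (simp add: norm_divide)
    then have "cmod (\<chi>$i) ^ 2 = cmod (v$i) ^ 2 / (sqrt s) ^ 2" by (simp add: power_divide)
    also have "(sqrt s) ^ 2 = s" using s by simp
    finally show "cmod (\<chi>$i) ^ 2 = (1 / s) * cmod (v$i) ^ 2" by simp
  qed
  also have "\<dots> = (1 / s) * s" unfolding s_def by (rule sum_distrib_left[symmetric])
  also have "\<dots> = 1" using s by simp
  finally have u: "unit_vector N \<chi>" unfolding unit_vector_def using \<chi>c by simp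
  have ev2: "\<rho> *\<^sub>v \<chi> = of_real lam \<cdot>\<^sub>v \<chi>"
    unfolding \<chi>_def using mult_mat_vec[OF \<rho>c v, of c] ev v by (auto simp: smult_smult_assoc mult.commute)
  have "(\<Sum>r<N. cnj (\<chi>$r) * (\<rho> *\<^sub>v \<chi>)$r) = of_real lam * of_real (\<Sum>i<N. cmod (\<chi>$i) ^ 2)"
    by (rule qf_eig[OF \<chi>c ev2])
  then have "Re (\<Sum>r<N. cnj (\<chi>$r) * (\<rho> *\<^sub>v \<chi>)$r) = lam" using u unfolding unit_vector_def by simp
  then show ?thesis using u lm by auto
qed



theorem lemma2:
  fixes d :: nat and \<Lambda> :: "complex mat \<Rightarrow> complex mat"
  assumes "d \<ge> 2"
    and "quantum_channel d \<Lambda>"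
  shows "channel_singlet_fraction d \<Lambda> \<ge> lambda_max (rho_state d (phi_plus d) \<Lambda>)"
proof -
  have ch: "quantum_channel d \<Lambda>" by (rule assms(2))
  have n: "0 < d" using assms(1) by simp
  have N: "0 < d*d" using n by simp
  define B where "B = 2 * real (d*d) ^ 2"
  have me_unit: "\<And>\<Phi>. max_entangled d \<Phi> \<Longrightarrow> unit_vector (d*d) \<Phi>" unfolding max_entangled_def by auto
  have ppme: "max_entangled d (phi_plus d)" by (rule pp_max_ent[OF n])
  have bound_sf: "singlet_fraction d (L (rho_state d \<psi> \<Lambda>)) \<le> B"
    if u: "unit_vector (d*d) \<psi>" and L: "LOCC d d d d L" for \<psi> L
  proof -
    have g: "psd (d*d) (rho_state d \<psi> \<Lambda>) \<and> mtrace (rho_state d \<psi> \<Lambda>) = 1" by (rule rho_state_good[OF ch u])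
    have "psd (d*d) (L (rho_state d \<psi> \<Lambda>)) \<and> mtrace (L (rho_state d \<psi> \<Lambda>)) = mtrace (rho_state d \<psi> \<Lambda>)"
      using LOCC_psd[OF L] g by blast
    then have Y: "psd (d*d) (L (rho_state d \<psi> \<Lambda>))" "mtrace (L (rho_state d \<psi> \<Lambda>)) = 1" using g by auto
    show ?thesis unfolding singlet_fraction_def
    proof (rule cSUP_least)
      show "{\<Phi>. max_entangled d \<Phi>} \<noteq> {}" using ppme by auto
      fix \<Phi> assume "\<Phi> \<in> {\<Phi>. max_entangled d \<Phi>}"
      then have "unit_vector (d*d) \<Phi>" using me_unit by auto
      then show "expval \<Phi> (L (rho_state d \<psi> \<Lambda>)) \<le> B" unfolding B_def by (rule expval_bound[OF Y])
    qed
  qed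
  have bound_msf: "max_singlet_fraction d (rho_state d \<psi> \<Lambda>) \<le> B" if u: "unit_vector (d*d) \<psi>" for \<psi>
    unfolding max_singlet_fraction_def
  proof (rule cSUP_least)
    have "LOCC d d d d (\<lambda>X. X)" by (rule LOCC_id)
    then show "{L. LOCC d d d d L} \<noteq> {}" by auto
    fix L assume "L \<in> {L. LOCC d d d d L}"
    then show "singlet_fraction d (L (rho_state d \<psi> \<Lambda>)) \<le> B" using bound_sf[OF u] by auto
  qed
  have \<rho>: "psd (d*d) (rho_state d (phi_plus d) \<Lambda>)" using rho_state_good[OF ch me_unit[OF ppme]] by auto
  obtain \<chi> where u\<chi>: "unit_vector (d*d) \<chi>"
    and lam: "Re (\<Sum>r<d*d. cnj (\<chi>$r) * (rho_state d (phi_plus d) \<Lambda> *\<^sub>v \<chi>)$r) = lambda_max (rho_state d (phi_plus d) \<Lambda>)"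
    using eig[OF \<rho> N] by auto
  have \<chi>c: "\<chi> \<in> carrier_vec (d*d)" using u\<chi> unfolding unit_vector_def by auto
  define \<psi> where "\<psi> = swapc d \<chi>"
  have u\<psi>: "unit_vector (d*d) \<psi>" unfolding \<psi>_def by (rule swapc_unit[OF u\<chi>])
  have ex: "expval (phi_plus d) (rho_state d \<psi> \<Lambda>) = lambda_max (rho_state d (phi_plus d) \<Lambda>)"
    unfolding expval_def pp_dim \<psi>_def key[OF ch n \<chi>c] using lam .
  have "lambda_max (rho_state d (phi_plus d) \<Lambda>) \<le> singlet_fraction d (rho_state d \<psi> \<Lambda>)"
    unfolding ex[symmetric] singlet_fraction_def
  proof (rule cSUP_upper)
    show "phi_plus d \<in> {\<Phi>. max_entangled d \<Phi>}" using ppme by auto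
    show "bdd_above ((\<lambda>\<Phi>. expval \<Phi> (rho_state d \<psi> \<Lambda>)) ` {\<Phi>. max_entangled d \<Phi>})"
    proof (rule bdd_aboveI2)
      fix \<Phi> assume "\<Phi> \<in> {\<Phi>. max_entangled d \<Phi>}"
      then have "unit_vector (d*d) \<Phi>" using me_unit by auto
      then show "expval \<Phi> (rho_state d \<psi> \<Lambda>) \<le> B" unfolding B_def
        using expval_bound rho_state_good[OF ch u\<psi>] by blast
    qed
  qed
  also have "\<dots> \<le> max_singlet_fraction d (rho_state d \<psi> \<Lambda>)"
    unfolding max_singlet_fraction_def
  proof -
    have "singlet_fraction d ((\<lambda>X. X) (rho_state d \<psi> \<Lambda>)) \<le> (SUP L\<in>{L. LOCC d d d d L}. singlet_fraction d (L (rho_state d \<psi> \<Lambda>)))"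
    proof (rule cSUP_upper)
      show "(\<lambda>X. X) \<in> {L. LOCC d d d d L}" using LOCC_id by auto
      show "bdd_above ((\<lambda>L. singlet_fraction d (L (rho_state d \<psi> \<Lambda>))) ` {L. LOCC d d d d L})"
        by (rule bdd_aboveI2, use bound_sf[OF u\<psi>] in auto)
    qed
    then show "singlet_fraction d (rho_state d \<psi> \<Lambda>) \<le> (SUP L\<in>{L. LOCC d d d d L}. singlet_fraction d (L (rho_state d \<psi> \<Lambda>)))"
      by simp
  qed
  also have "\<dots> \<le> channel_singlet_fraction d \<Lambda>"
    unfolding channel_singlet_fraction_def
  proof (rule cSUP_upper)
    show "\<psi> \<in> {\<psi>. unit_vector (d*d) \<psi>}" using u\<psi> by auto
    show "bdd_above ((\<lambda>\<psi>. max_singlet_fraction d (rho_state d \<psi> \<Lambda>)) ` {\<psi>. unit_vector (d*d) \<psi>})"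
      by (rule bdd_aboveI2, use bound_msf in auto)
  qed
  finally show ?thesis .
qed

end
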